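(* Let the setting and the algorithm RandProx be as in the context, with $g=0$. Suppose that $\mu_f>0$, and that $\lambda_{\min}(KK^* )>0$ or $\mu_{h^*}>0$. Suppose that $0<\gamma<\frac{2}{L_f}$, $\tau>0$ and $\gamma\tau\big((1-\zeta)\|K\|^2+\omega_{\mathrm{ran}}\big)\le 1$. For $t\ge0$ let $\Psi^t:=\frac{1}{\gamma}\|x^t-x^\star\|^2+(1+\omega)\big(\frac{1}{\tau}+2\mu_{h^*}\big)\|u^t-u^\star\|^2$, where $x^\star,u^\star$ are the unique primal and dual solutions. Then for every $t\ge0$, $\mathbb{E}[\Psi^t]\le c^t\Psi^0$, where $$c:=\max\left((1-\gamma\mu_f)^2,\ (\gamma L_f-1)^2,\ 1-\frac{2\tau\mu_{h^*}+\gamma\tau\lambda_{\min}(KK^* )}{(1+\omega)(1+2\tau\mu_{h^*})}\right)<1.$$ Moreover, $(x^t)$ and $(\hat{x}^t)$ both converge to $x^\star$ and $(u^t)$ converges to $u^\star$, almost surely.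
   Context: $\mathcal{X},\mathcal{U}$ are finite-dimensional real Hilbert spaces, $K:\mathcal{X}\to\mathcal{U}$ a nonzero linear operator with adjoint $K^*$, $\lambda_{\min}(KK^* )$ the smallest eigenvalue of $KK^*$. $f:\mathcal{X}\to\mathbb{R}$ convex and $L_f$-smooth ($\nabla f$ $L_f$-Lipschitz); $h:\mathcal{U}\to\mathbb{R}\cup\{+\infty\}$ proper closed convex with conjugate $h^*$. A convex $\phi$ is $\mu_\phi$-strongly convex ($\mu_\phi\ge0$) if $\phi-\frac{\mu_\phi}{2}\|\cdot\|^2$ is convex; $\mu_f,\mu_{h^*}\ge0$ are such constants. $\mathrm{prox}_{\gamma\phi}(x):=\arg\min_{x'}(\gamma\phi(x')+\frac12\|x'-x\|^2)$. Primal problem: minimize $f(x)+h(Kx)$; dual: minimize $f^*(-K^*u)+h^*(u)$. It is assumed there exists $(x^\star,u^\star)$ with $0\in\nabla f(x^\star)+K^*u^\star$, $0\in-Kx^\star+\partial h^*(u^\star)$. Algorithm RandProx (with $g=0$): inputs $x^0,u^0,\gamma>0,\tau>0,\omega\ge0$; $v^0:=K^*u^0$; for $t\ge0$: $\hat{x}^t:=x^t-\gamma\nabla f(x^t)-\gamma v^t$; $u^{t+1}:=u^t+\frac{1}{1+\omega}\mathcal{R}^t\big(\mathrm{prox}_{\tau h^*}(u^t+\tau K\hat{x}^t)-u^t\big)$; $v^{t+1}:=K^*u^{t+1}$; $x^{t+1}:=\hat{x}^t-\gamma(1+\omega)(v^{t+1}-v^t)$. With $\mathcal{F}_t$ the $\sigma$-algebra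 generated by $(x^0,u^0),\dots,(x^t,u^t)$ and $r^t:=\mathrm{prox}_{\tau h^*}(u^t+\tau K\hat{x}^t)-u^t$, the random estimate $\mathcal{R}^t(r^t)$ satisfies $\mathbb{E}[\mathcal{R}^t(r^t)\mid\mathcal{F}_t]=r^t$, $\mathbb{E}[\|\mathcal{R}^t(r^t)-r^t\|^2\mid\mathcal{F}_t]\le\omega\|r^t\|^2$, $\mathbb{E}[\|K^*(\mathcal{R}^t(r^t)-r^t)\|^2\mid\mathcal{F}_t]\le\omega_{\mathrm{ran}}\|r^t\|^2-\zeta\|K^*r^t\|^2$, for constants $\omega_{\mathrm{ran}}\ge0$, $\zeta\in[0,1]$. *)

theory Defs
  imports "HOL-Analysis.Analysis" "HOL-Probability.Probability"
begin

definition proper_fun :: "('a \<Rightarrow> ereal) \<Rightarrow> bool" where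
  "proper_fun \<phi> \<longleftrightarrow> (\<forall>x. \<phi> x \<noteq> -\<infinity>) \<and> (\<exists>x. \<phi> x < \<infinity>)"

definition convex_fun :: "('a::real_vector \<Rightarrow> ereal) \<Rightarrow> bool" where
  "convex_fun \<phi> \<longleftrightarrow> convex {(x, t::real). \<phi> x \<le> ereal t}"

definition closed_fun :: "('a::topological_space \<Rightarrow> ereal) \<Rightarrow> bool" where
  "closed_fun \<phi> \<longleftrightarrow> closed {(x, t::real). \<phi> x \<le> ereal t}"

definition strongly_convex_fun :: "real \<Rightarrow> ('a::real_normed_vector \<Rightarrow> ereal) \<Rightarrow> bool" where
  "strongly_convex_fun \<mu> \<phi> \<longleftrightarrow> convex_fun (\<lambda>x. \<phi> x - ereal (\<mu> / 2 * (norm x)\<^sup>2))"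

definition fconj :: "('a::real_inner \<Rightarrow> ereal) \<Rightarrow> 'a \<Rightarrow> ereal" where
  "fconj h u = (SUP v. ereal (u \<bullet> v) - h v)"

definition prox :: "real \<Rightarrow> ('a::real_normed_vector \<Rightarrow> ereal) \<Rightarrow> 'a \<Rightarrow> 'a" where
  "prox \<gamma> \<phi> x = (SOME p. \<forall>q. ereal \<gamma> * \<phi> p + ereal ((norm (p - x))\<^sup>2 / 2)
                              \<le> ereal \<gamma> * \<phi> q + ereal ((norm (q - x))\<^sup>2 / 2))"

definition subdiff :: "('a::real_inner \<Rightarrow> ereal) \<Rightarrow> 'a \<Rightarrow> 'a set" where
  "subdiff \<phi> u = {g. \<phi> u \<noteq> \<infinity> \<and> (\<forall>v. \<phi> u + ereal (g \<bullet> (v - u)) \<le> \<phi> v)}"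

definition lambda_min :: "('a::real_vector \<Rightarrow> 'a) \<Rightarrow> real" where
  "lambda_min A = Min {l. \<exists>v. v \<noteq> 0 \<and> A v = l *\<^sub>R v}"

definition natural_filtration ::
    "'s measure \<Rightarrow> (nat \<Rightarrow> 's \<Rightarrow> 'b::topological_space) \<Rightarrow> nat \<Rightarrow> 's measure" where
  "natural_filtration M X t =
     sigma (space M) {X i -` A \<inter> space M | i A. i \<le> t \<and> A \<in> sets borel}"

end

theory Submission
  imports Defs
begin

lemma above_tangent:
  fixes f :: "'a::real_inner \<Rightarrow> real"
  assumes cv: "convex_on UNIV f" and d: "\<And>y. (f has_derivative (\<lambda>d. G y \<bullet> d)) (at y)"
  shows "f x + G x \<bullet> (y - x) \<le> f y"
proof -
  define \<phi> where "\<phi> t = f (x + t *\<^sub>R (y - x))" for t :: real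
  have cphi: "convex_on UNIV \<phi>"
  proof (rule convex_onI)
    fix t a b :: real assume t: "0 < t" "t < 1"
    have "x + ((1 - t) * a + t * b) *\<^sub>R (y - x) = (1 - t) *\<^sub>R (x + a *\<^sub>R (y - x)) + t *\<^sub>R (x + b *\<^sub>R (y - x))"
      by (simp add: algebra_simps)
    then show "\<phi> ((1 - t) *\<^sub>R a + t *\<^sub>R b) \<le> (1 - t) * \<phi> a + t * \<phi> b"
      unfolding \<phi>_def using convex_onD[OF cv, of t] t by simp
  qed simp
  have "((\<lambda>t. x + t *\<^sub>R (y - x)) has_derivative (\<lambda>t. t *\<^sub>R (y - x))) (at 0)"
    by (auto intro!: derivative_eq_intros)
  from has_derivative_compose[OF this d]
  have "(\<phi> has_derivative (\<lambda>t. G x \<bullet> (t *\<^sub>R (y - x)))) (at 0)"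
    unfolding \<phi>_def[abs_def] by (simp add: o_def)
  then have "(\<phi> has_field_derivative (G x \<bullet> (y - x))) (at 0)"
    unfolding has_field_derivative_def by (rule has_derivative_eq_rhs) (auto simp: fun_eq_iff)
  from convex_on_imp_above_tangent[OF cphi, of 0 1, simplified, OF this]
  show ?thesis unfolding \<phi>_def by simp
qed

lemma descent:
  fixes f :: "'a::real_inner \<Rightarrow> real"
  assumes d: "\<And>y. (f has_derivative (\<lambda>d. G y \<bullet> d)) (at y)"
    and L: "\<And>y z. G y \<bullet> (y - z) - G z \<bullet> (y - z) \<le> L * (norm (y - z))\<^sup>2"
  shows "f y \<le> f x + G x \<bullet> (y - x) + L / 2 * (norm (y - x))\<^sup>2"
proof -
  define \<phi> where "\<phi> t = f (x + t *\<^sub>R (y - x)) - t * (G x \<bullet> (y - x)) - L / 2 * t\<^sup>2 * (norm (y - x))\<^sup>2" for t :: real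
  have "\<phi> 1 \<le> \<phi> 0"
  proof (rule DERIV_nonpos_imp_nonincreasing[of 0 1 \<phi>])
    fix t :: real assume t: "0 \<le> t" "t \<le> 1"
    have "((\<lambda>t. x + t *\<^sub>R (y - x)) has_derivative (\<lambda>s. s *\<^sub>R (y - x))) (at t)"
      by (auto intro!: derivative_eq_intros)
    from has_derivative_compose[OF this d]
    have "((\<lambda>t. f (x + t *\<^sub>R (y - x))) has_derivative (\<lambda>s. G (x + t *\<^sub>R (y - x)) \<bullet> (s *\<^sub>R (y - x)))) (at t)"
      by (simp add: o_def)
    then have d1: "((\<lambda>t. f (x + t *\<^sub>R (y - x))) has_field_derivative (G (x + t *\<^sub>R (y - x)) \<bullet> (y - x))) (at t)"
      unfolding has_field_derivative_def by (rule has_derivative_eq_rhs) (auto simp: fun_eq_iff)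
    have "(\<phi> has_field_derivative (G (x + t *\<^sub>R (y - x)) \<bullet> (y - x) - G x \<bullet> (y - x) - L / 2 * (2 * t) * (norm (y - x))\<^sup>2)) (at t)"
      unfolding \<phi>_def[abs_def]
      by (rule derivative_eq_intros d1 refl | simp)+
    moreover have "G (x + t *\<^sub>R (y - x)) \<bullet> (y - x) - G x \<bullet> (y - x) - L / 2 * (2 * t) * (norm (y - x))\<^sup>2 \<le> 0"
    proof (cases "t = 0")
      case False
      have "G (x + t *\<^sub>R (y - x)) \<bullet> ((x + t *\<^sub>R (y - x)) - x) - G x \<bullet> ((x + t *\<^sub>R (y - x)) - x) \<le> L * (norm ((x + t *\<^sub>R (y - x)) - x))\<^sup>2"
        by (rule L)
      moreover have "(x + t *\<^sub>R (y - x)) - x = t *\<^sub>R (y - x)" by simp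
      ultimately have "G (x + t *\<^sub>R (y - x)) \<bullet> (t *\<^sub>R (y - x)) - G x \<bullet> (t *\<^sub>R (y - x)) \<le> L * (norm (t *\<^sub>R (y - x)))\<^sup>2"
        by metis
      moreover have "norm (t *\<^sub>R (y - x)) = t * norm (y - x)" using t by simp
      ultimately have "t * (G (x + t *\<^sub>R (y - x)) \<bullet> (y - x)) - t * (G x \<bullet> (y - x)) \<le> L * (t * norm (y - x))\<^sup>2"
        unfolding inner_scaleR_right by metis
      then have "t * (G (x + t *\<^sub>R (y - x)) \<bullet> (y - x) - G x \<bullet> (y - x)) \<le> t * (t * L * (norm (y - x))\<^sup>2)"
        by (simp add: power2_eq_square algebra_simps)
      then have "G (x + t *\<^sub>R (y - x)) \<bullet> (y - x) - G x \<bullet> (y - x) \<le> t * L * (norm (y - x))\<^sup>2"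
        using t False mult_le_cancel_left_pos by (metis less_eq_real_def)
      then show ?thesis by (simp add: algebra_simps)
    qed simp
    ultimately show "\<exists>y. (\<phi> has_real_derivative y) (at t) \<and> y \<le> 0" by blast
  qed simp
  then show ?thesis unfolding \<phi>_def by simp
qed


lemma coco_alg:
  fixes d e :: "'a::real_inner"
  assumes b: "\<beta> \<ge> 0" and co: "(norm e)\<^sup>2 \<le> \<beta> * (d \<bullet> e)" and g: "\<gamma> \<ge> 0"
  shows "(norm (a *\<^sub>R d - \<gamma> *\<^sub>R e))\<^sup>2 \<le> max (a\<^sup>2) ((a - \<gamma> * \<beta>)\<^sup>2) * (norm d)\<^sup>2"
proof -
  define D E P where "D = norm d" and "E = norm e" and "P = d \<bullet> e"
  have D0: "D \<ge> 0" and E0: "E \<ge> 0" unfolding D_def E_def by auto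
  have PDE: "\<bar>P\<bar> \<le> D * E" unfolding P_def D_def E_def by (rule Cauchy_Schwarz_ineq2)
  have eq: "(norm (a *\<^sub>R d - \<gamma> *\<^sub>R e))\<^sup>2 = a\<^sup>2 * D\<^sup>2 - 2 * a * \<gamma> * P + \<gamma>\<^sup>2 * E\<^sup>2"
    unfolding D_def E_def P_def power2_norm_eq_inner
    by (simp add: inner_diff_left inner_diff_right inner_commute power2_eq_square algebra_simps)
  have co': "E\<^sup>2 \<le> \<beta> * P" using co unfolding E_def P_def .
  have EbD: "E \<le> \<beta> * D"
  proof (cases "E = 0")
    case True then show ?thesis using b D0 by simp
  next
    case False
    then have "E > 0" using E0 by simp
    have "E * E \<le> \<beta> * D * E" using co' PDE b
      by (smt (verit, ccfv_SIG) mult_left_mono power2_eq_square mult.assoc abs_le_iff)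
    then show ?thesis using \<open>E > 0\<close> by simp
  qed
  have P0: "P \<ge> 0 \<or> E = 0"
    using co' b by (smt (verit) mult_nonpos_nonneg zero_less_power2 power2_eq_square mult_nonneg_nonneg E0 mult_le_0_iff)
  show ?thesis unfolding eq D_def[symmetric]
  proof (cases "a \<ge> 0")
    case True
    show "a\<^sup>2 * D\<^sup>2 - 2 * a * \<gamma> * P + \<gamma>\<^sup>2 * E\<^sup>2 \<le> max (a\<^sup>2) ((a - \<gamma> * \<beta>)\<^sup>2) * D\<^sup>2"
    proof (cases "E = 0")
      case True
      have "2 * a * \<gamma> * P = 0" using PDE True by simp
      moreover have "a\<^sup>2 * D\<^sup>2 \<le> max (a\<^sup>2) ((a - \<gamma> * \<beta>)\<^sup>2) * D\<^sup>2" by (intro mult_right_mono) auto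
      ultimately show ?thesis using True by (metis diff_zero mult_zero_left mult_zero_right power_zero_numeral add_0_right)
    next
      case False
      then have Pp: "P \<ge> 0" using P0 by simp
      have bp: "\<beta> > 0" using False co' b E0
        by (metis less_eq_real_def mult_zero_left power_zero_numeral zero_less_power2 not_less)
      have "(2 * a * \<gamma>) * E\<^sup>2 \<le> (2 * a * \<gamma>) * (\<beta> * P)" using co' True g by (intro mult_left_mono) auto
      then have "\<beta> * (2 * a * \<gamma> * P) \<ge> 2 * a * \<gamma> * E\<^sup>2" by (simp add: mult_ac)
      show ?thesis
      proof (cases "\<gamma> * \<beta> \<le> 2 * a")
        case True
        have "(\<gamma> * E\<^sup>2) * (\<gamma> * \<beta>) \<le> (\<gamma> * E\<^sup>2) * (2 * a)"
          using True g by (intro mult_left_mono) auto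
        then have "\<gamma>\<^sup>2 * E\<^sup>2 * \<beta> \<le> 2 * a * \<gamma> * E\<^sup>2"
          by (simp add: power2_eq_square mult_ac)
        also have "\<dots> \<le> \<beta> * (2 * a * \<gamma> * P)" by fact
        finally have "\<gamma>\<^sup>2 * E\<^sup>2 \<le> 2 * a * \<gamma> * P" using bp
          by (simp add: mult.commute)
        then show ?thesis by (smt (verit) max.cobounded1 mult_right_mono zero_le_power2)
      next
        case gt: False
        have "\<beta> * (- 2 * a * \<gamma> * P + \<gamma>\<^sup>2 * E\<^sup>2) \<le> - 2 * a * \<gamma> * E\<^sup>2 + \<beta> * \<gamma>\<^sup>2 * E\<^sup>2"
          using \<open>\<beta> * (2 * a * \<gamma> * P) \<ge> 2 * a * \<gamma> * E\<^sup>2\<close> by (simp add: algebra_simps)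
        also have "\<dots> = \<gamma> * (\<beta> * \<gamma> - 2 * a) * E\<^sup>2" by (simp add: algebra_simps power2_eq_square)
        also have "\<dots> \<le> \<gamma> * (\<beta> * \<gamma> - 2 * a) * (\<beta> * D)\<^sup>2"
          using gt g EbD E0 by (intro mult_left_mono power_mono) (auto simp: mult.commute)
        finally have "\<beta> * (- 2 * a * \<gamma> * P + \<gamma>\<^sup>2 * E\<^sup>2) \<le> \<beta> * (\<gamma> * (\<beta> * \<gamma> - 2 * a) * \<beta> * D\<^sup>2)"
          by (simp add: power2_eq_square algebra_simps)
        then have "- 2 * a * \<gamma> * P + \<gamma>\<^sup>2 * E\<^sup>2 \<le> \<gamma> * (\<beta> * \<gamma> - 2 * a) * \<beta> * D\<^sup>2"
          using bp by simp
        then have "a\<^sup>2 * D\<^sup>2 - 2 * a * \<gamma> * P + \<gamma>\<^sup>2 * E\<^sup>2 \<le> (a - \<gamma> * \<beta>)\<^sup>2 * D\<^sup>2"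
          by (simp add: power2_eq_square algebra_simps)
        then show ?thesis by (smt (verit) max.cobounded2 mult_right_mono zero_le_power2)
      qed
    qed
  next
    case False
    have "- 2 * a * \<gamma> * P \<le> 2 * (-a) * \<gamma> * (D * E)"
      using False g PDE by (smt (verit) mult_left_mono mult_nonneg_nonneg abs_le_iff mult_minus_left)
    also have "\<dots> \<le> 2 * (-a) * \<gamma> * (D * (\<beta> * D))"
      using False g EbD D0 by (intro mult_left_mono) (auto simp: mult_nonneg_nonpos2 mult_le_0_iff)
    finally have A: "- 2 * a * \<gamma> * P \<le> 2 * (-a) * \<gamma> * \<beta> * D\<^sup>2" by (simp add: power2_eq_square algebra_simps)
    have B: "\<gamma>\<^sup>2 * E\<^sup>2 \<le> \<gamma>\<^sup>2 * (\<beta> * D)\<^sup>2"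
      using EbD E0 by (intro mult_left_mono power_mono) auto
    have "a\<^sup>2 * D\<^sup>2 - 2 * a * \<gamma> * P + \<gamma>\<^sup>2 * E\<^sup>2 \<le> (a - \<gamma> * \<beta>)\<^sup>2 * D\<^sup>2"
      using A B by (simp add: power2_eq_square algebra_simps)
    then show "a\<^sup>2 * D\<^sup>2 - 2 * a * \<gamma> * P + \<gamma>\<^sup>2 * E\<^sup>2 \<le> max (a\<^sup>2) ((a - \<gamma> * \<beta>)\<^sup>2) * D\<^sup>2"
      by (smt (verit) max.cobounded2 mult_right_mono zero_le_power2)
  qed
qed


lemma cocoercive:
  fixes g :: "'a::real_inner \<Rightarrow> real"
  assumes cv: "convex_on UNIV g" and d: "\<And>y. (g has_derivative (\<lambda>d. G y \<bullet> d)) (at y)"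
    and L: "\<And>y z. G y \<bullet> (y - z) - G z \<bullet> (y - z) \<le> \<beta> * (norm (y - z))\<^sup>2"
    and bp: "\<beta> > 0"
  shows "(norm (G z - G x))\<^sup>2 \<le> \<beta> * ((G z - G x) \<bullet> (z - x))"
proof -
  have I: "g x + G x \<bullet> (z - x) + (norm (G z - G x))\<^sup>2 / (2 * \<beta>) \<le> g z" for x z
  proof -
    define \<Delta> where "\<Delta> = G z - G x"
    define z' where "z' = z - (1 / \<beta>) *\<^sub>R \<Delta>"
    have a: "g x + G x \<bullet> (z' - x) \<le> g z'" by (rule above_tangent[OF cv d])
    have b: "g z' \<le> g z + G z \<bullet> (z' - z) + \<beta> / 2 * (norm (z' - z))\<^sup>2" by (rule descent[OF d L])
    have "z' - z = - ((1 / \<beta>) *\<^sub>R \<Delta>)" unfolding z'_def by simp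
    then have n: "(norm (z' - z))\<^sup>2 = (norm \<Delta>)\<^sup>2 / \<beta>\<^sup>2" and
       i1: "G z \<bullet> (z' - z) = - (G z \<bullet> \<Delta>) / \<beta>"
      using bp by (simp_all add: power_divide)
    have i2: "G x \<bullet> (z' - x) = G x \<bullet> (z - x) - (G x \<bullet> \<Delta>) / \<beta>"
      unfolding z'_def by (simp add: inner_diff_right)
    have "(norm \<Delta>)\<^sup>2 = G z \<bullet> \<Delta> - G x \<bullet> \<Delta>"
      unfolding \<Delta>_def power2_norm_eq_inner by (simp add: inner_diff_left)
    then have "g x + G x \<bullet> (z - x) + (norm \<Delta>)\<^sup>2 / \<beta> - \<beta> / 2 * ((norm \<Delta>)\<^sup>2 / \<beta>\<^sup>2) \<le> g z"
      using a b n i1 i2 by (simp add: diff_divide_distrib)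
    moreover have "\<beta> / 2 * ((norm \<Delta>)\<^sup>2 / \<beta>\<^sup>2) = (norm \<Delta>)\<^sup>2 / (2 * \<beta>)"
      using bp by (simp add: power2_eq_square field_simps)
    moreover have "(norm \<Delta>)\<^sup>2 / \<beta> - (norm \<Delta>)\<^sup>2 / (2 * \<beta>) = (norm \<Delta>)\<^sup>2 / (2 * \<beta>)"
      using bp by (simp add: field_simps)
    ultimately show ?thesis unfolding \<Delta>_def by linarith
  qed
  have "(norm (G x - G z))\<^sup>2 = (norm (G z - G x))\<^sup>2" by (simp add: norm_minus_commute)
  with I[of x z] I[of z x]
  have "(norm (G z - G x))\<^sup>2 / \<beta> \<le> (G z - G x) \<bullet> (z - x)"
    by (simp add: inner_diff_left inner_diff_right inner_commute algebra_simps add_divide_distrib[symmetric])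
  then show ?thesis using bp by (simp add: field_simps)
qed

lemma grad_facts:
  fixes f :: "'a::real_inner \<Rightarrow> real"
  assumes d: "\<And>y. (f has_derivative (\<lambda>d. gf y \<bullet> d)) (at y)"
    and lip: "\<And>y z. norm (gf y - gf z) \<le> L * norm (y - z)"
    and sc: "convex_on UNIV (\<lambda>y. f y - \<mu> / 2 * (norm y)\<^sup>2)"
    and g0: "\<gamma> \<ge> 0"
  shows "(norm (x - \<gamma> *\<^sub>R gf x - (y - \<gamma> *\<^sub>R gf y)))\<^sup>2 \<le> max ((1 - \<gamma> * \<mu>)\<^sup>2) ((\<gamma> * L - 1)\<^sup>2) * (norm (x - y))\<^sup>2"
    and "\<mu> * (norm (x - y))\<^sup>2 \<le> (gf x - gf y) \<bullet> (x - y)"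
    and "(gf x - gf y) \<bullet> (x - y) \<le> L * (norm (x - y))\<^sup>2"
proof -
  define G where "G y = gf y - \<mu> *\<^sub>R y" for y
  have dg: "((\<lambda>y. f y - \<mu> / 2 * (norm y)\<^sup>2) has_derivative (\<lambda>d. G y \<bullet> d)) (at y)" for y
  proof -
    have "((\<lambda>y. f y - \<mu> / 2 * (y \<bullet> y)) has_derivative (\<lambda>d. gf y \<bullet> d - \<mu> / 2 * (y \<bullet> d + d \<bullet> y))) (at y)"
      by (rule has_derivative_diff[OF d has_derivative_mult_right[OF has_derivative_inner[OF has_derivative_ident has_derivative_ident]]])
    then show ?thesis unfolding G_def power2_norm_eq_inner
      by (rule has_derivative_eq_rhs) (auto simp: fun_eq_iff inner_diff_left inner_diff_right inner_commute)
  qed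
  have up: "(gf y - gf z) \<bullet> (y - z) \<le> L * (norm (y - z))\<^sup>2" for y z
  proof -
    have "(gf y - gf z) \<bullet> (y - z) \<le> norm (gf y - gf z) * norm (y - z)" by (rule norm_cauchy_schwarz)
    also have "\<dots> \<le> L * norm (y - z) * norm (y - z)" by (rule mult_right_mono[OF lip]) simp
    finally show ?thesis by (simp add: power2_eq_square mult.assoc)
  qed
  show "(gf x - gf y) \<bullet> (x - y) \<le> L * (norm (x - y))\<^sup>2" by (rule up)
  have Gd: "(G y - G z) \<bullet> (y - z) = (gf y - gf z) \<bullet> (y - z) - \<mu> * (norm (y - z))\<^sup>2" for y z
    unfolding G_def power2_norm_eq_inner by (simp add: algebra_simps inner_diff_left inner_diff_right)
  have mono: "(G y - G z) \<bullet> (y - z) \<ge> 0" for y z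
    using above_tangent[OF sc dg, of y z] above_tangent[OF sc dg, of z y]
    by (simp add: inner_diff_left inner_diff_right algebra_simps)
  show "\<mu> * (norm (x - y))\<^sup>2 \<le> (gf x - gf y) \<bullet> (x - y)" using mono[of x y] Gd[of x y] by simp
  define \<beta> where "\<beta> = L - \<mu>"
  have Lg: "G y \<bullet> (y - z) - G z \<bullet> (y - z) \<le> (\<beta> + \<epsilon>) * (norm (y - z))\<^sup>2" if "\<epsilon> \<ge> 0" for y z \<epsilon>
  proof -
    have "G y \<bullet> (y - z) - G z \<bullet> (y - z) = (G y - G z) \<bullet> (y - z)" by (simp add: inner_diff_left)
    also have "\<dots> \<le> \<beta> * (norm (y - z))\<^sup>2" unfolding Gd \<beta>_def using up[of y z] by (simp add: algebra_simps)
    also have "\<dots> \<le> (\<beta> + \<epsilon>) * (norm (y - z))\<^sup>2" using that by (simp add: mult_right_mono)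
    finally show ?thesis .
  qed
  have mono2: "0 \<le> \<beta> * (norm (x - y))\<^sup>2" using Lg[of 0 x y] mono[of x y] by (simp add: inner_diff_left)
  show "(norm (x - \<gamma> *\<^sub>R gf x - (y - \<gamma> *\<^sub>R gf y)))\<^sup>2 \<le> max ((1 - \<gamma> * \<mu>)\<^sup>2) ((\<gamma> * L - 1)\<^sup>2) * (norm (x - y))\<^sup>2"
  proof (cases "x = y")
    case True then show ?thesis by simp
  next
    case False
  have b0: "\<beta> \<ge> 0" using False mono2 by (simp add: zero_le_mult_iff)
  have co: "(norm (G x - G y))\<^sup>2 \<le> \<beta> * ((x - y) \<bullet> (G x - G y))"
  proof (rule field_le_epsilon)
    fix e :: real assume e: "e > 0"
    define P where "P = (x - y) \<bullet> (G x - G y)"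
    have P0: "P \<ge> 0" using mono[of x y] by (simp add: P_def inner_commute)
    define \<epsilon> where "\<epsilon> = e / (P + 1)"
    have ep: "\<epsilon> > 0" using e P0 by (simp add: \<epsilon>_def)
    have "(norm (G x - G y))\<^sup>2 \<le> (\<beta> + \<epsilon>) * ((G x - G y) \<bullet> (x - y))"
      by (rule cocoercive[OF sc dg Lg]) (use ep b0 in auto)
    also have "\<dots> = \<beta> * P + \<epsilon> * P" by (simp add: P_def inner_commute algebra_simps)
    also have "\<epsilon> * P \<le> e" using e P0 by (simp add: \<epsilon>_def field_simps)
    finally show "(norm (G x - G y))\<^sup>2 \<le> \<beta> * ((x - y) \<bullet> (G x - G y)) + e" by (simp add: P_def)
  qed
  have "x - \<gamma> *\<^sub>R gf x - (y - \<gamma> *\<^sub>R gf y) = (1 - \<gamma> * \<mu>) *\<^sub>R (x - y) - \<gamma> *\<^sub>R (G x - G y)"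
    unfolding G_def by (simp add: algebra_simps)
  then have "(norm (x - \<gamma> *\<^sub>R gf x - (y - \<gamma> *\<^sub>R gf y)))\<^sup>2 \<le> max ((1 - \<gamma> * \<mu>)\<^sup>2) ((1 - \<gamma> * \<mu> - \<gamma> * \<beta>)\<^sup>2) * (norm (x - y))\<^sup>2"
    using coco_alg[OF b0 co g0, of "1 - \<gamma> * \<mu>"] by simp
  moreover have "(1 - \<gamma> * \<mu> - \<gamma> * \<beta>)\<^sup>2 = (\<gamma> * L - 1)\<^sup>2" unfolding \<beta>_def by (simp add: power2_eq_square algebra_simps)
  ultimately show ?thesis by simp
  qed
qed


lemma fconj_lower:
  fixes h :: "'u::real_inner \<Rightarrow> ereal"
  assumes "proper_fun h"
  obtains v0 a where "\<And>u. ereal (u \<bullet> v0 - a) \<le> fconj h u"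
proof -
  obtain v0 where v0: "h v0 < \<infinity>" "h v0 \<noteq> -\<infinity>" using assms unfolding proper_fun_def by auto
  then obtain a where a: "h v0 = ereal a" by (cases "h v0") auto
  have "ereal (u \<bullet> v0 - a) \<le> fconj h u" for u
  proof -
    have "ereal (u \<bullet> v0 - a) = ereal (u \<bullet> v0) - h v0" using a by simp
    also have "\<dots> \<le> fconj h u" unfolding fconj_def by (rule SUP_upper) simp
    finally show ?thesis .
  qed
  then show ?thesis using that by blast
qed

lemma fconj_closed:
  fixes h :: "'u::real_inner \<Rightarrow> ereal"
  assumes "proper_fun h"
  shows "closed {(x, t::real). fconj h x \<le> ereal t}"
proof -
  have eq: "{(x, t::real). fconj h x \<le> ereal t} = (\<Inter>v. {(x, t::real). ereal (x \<bullet> v) - h v \<le> ereal t})"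
    unfolding fconj_def by (auto simp: SUP_le_iff)
  have "closed {(x, t::real). ereal (x \<bullet> v) - h v \<le> ereal t}" for v
  proof (cases "h v")
    case (real a)
    have "{(x, t::real). ereal (x \<bullet> v) - h v \<le> ereal t} = {p. fst p \<bullet> v - a \<le> snd p}"
      using real by auto
    moreover have "closed {p :: 'u \<times> real. fst p \<bullet> v - a \<le> snd p}"
      by (intro closed_Collect_le continuous_intros)
    ultimately show ?thesis by simp
  next
    case PInf
    then show ?thesis by simp
  next
    case MInf
    then show ?thesis using assms unfolding proper_fun_def by auto
  qed
  then show ?thesis unfolding eq by (intro closed_Inter) auto
qed


lemma quad_bound:
  fixes R nz nv D qv a B \<tau> :: real
  assumes "R \<ge> 0" "nz \<ge> 0" "nv \<ge> 0" "\<tau> > 0" "D \<ge> R - nz" "D \<ge> 0" "qv \<ge> - R * nv"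
    "\<tau> * (qv - a) + D\<^sup>2 / 2 \<le> B"
  shows "R \<le> 1 + 2 * (nz + \<tau> * nv) + 2 * \<bar>B + \<tau> * a\<bar>"
proof (rule ccontr)
  define c where "c = nz + \<tau> * nv"
  define B' where "B' = B + \<tau> * a"
  assume "\<not> ?thesis"
  then have R: "R > 1 + 2 * c + 2 * \<bar>B'\<bar>" unfolding c_def B'_def by simp
  have c0: "c \<ge> 0" using assms unfolding c_def by simp
  have "R - nz > 0" using R c0 assms unfolding c_def by (smt (verit) mult_nonneg_nonneg)
  then have "D\<^sup>2 \<ge> (R - nz)\<^sup>2" using assms by (intro power_mono) auto
  moreover have "\<tau> * qv \<ge> \<tau> * (- (R * nv))" using assms by (intro mult_left_mono) auto
  ultimately have "(R - nz)\<^sup>2 / 2 - \<tau> * nv * R \<le> B'" using assms(8) unfolding B'_def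
    by (simp add: algebra_simps)
  moreover have "(R - nz)\<^sup>2 / 2 \<ge> R\<^sup>2 / 2 - R * nz" by (simp add: power2_eq_square algebra_simps)
  ultimately have "R * (R / 2 - c) \<le> B'" unfolding c_def
    by (simp add: power2_eq_square algebra_simps) (smt (verit) mult_nonneg_nonneg assms(2))
  moreover have "R * (R / 2 - c) \<ge> R * (1/2 + \<bar>B'\<bar>)" using R c0 by (intro mult_left_mono) auto
  moreover have "R * (1/2 + \<bar>B'\<bar>) > 1 * (1/2 + \<bar>B'\<bar>)" using R c0
    by (intro mult_strict_right_mono) auto
  ultimately have "1 * (1/2 + \<bar>B'\<bar>) < B'" by (meson order.strict_trans2 order.trans)
  then show False by (simp add: abs_if split: if_splits)
qed

lemma prox_exists:
  fixes hs :: "'u::euclidean_space \<Rightarrow> ereal"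
  assumes low: "\<And>u. ereal (u \<bullet> v0 - a) \<le> hs u"
    and cl: "closed {(x, t::real). hs x \<le> ereal t}"
    and fin: "hs u1 = ereal c1" and tp: "\<tau> > 0"
  shows "\<exists>p. \<forall>q. ereal \<tau> * hs p + ereal ((norm (p - z))\<^sup>2 / 2) \<le> ereal \<tau> * hs q + ereal ((norm (q - z))\<^sup>2 / 2)"
proof -
  define B where "B = \<tau> * c1 + (norm (u1 - z))\<^sup>2 / 2"
  define R0 where "R0 = 1 + 2 * (norm z + \<tau> * norm v0) + 2 * \<bar>B + \<tau> * a\<bar>"
  define lo where "lo = - R0 * norm v0 - a"
  define hi where "hi = B / \<tau>"
  define S where "S = {(x, t::real). hs x \<le> ereal t} \<inter> {p. \<tau> * snd p + (norm (fst p - z))\<^sup>2 / 2 \<le> B}"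
  define \<psi> where "\<psi> p = \<tau> * snd p + (norm (fst p - z))\<^sup>2 / 2" for p :: "'u \<times> real"
  have clS: "closed S" unfolding S_def
    by (intro closed_Int cl closed_Collect_le continuous_intros) auto
  have sub: "S \<subseteq> cball 0 R0 \<times> {lo..hi}"
  proof
    fix p assume "p \<in> S"
    then obtain q t where p: "p = (q, t)" and h: "hs q \<le> ereal t" and b: "\<tau> * t + (norm (q - z))\<^sup>2 / 2 \<le> B"
      unfolding S_def by auto
    have qt: "q \<bullet> v0 - a \<le> t" using low[of q] h by (metis ereal_less_eq(3) order_trans)
    have qv: "q \<bullet> v0 \<ge> - norm q * norm v0"
      using Cauchy_Schwarz_ineq2[of q v0] by (simp add: abs_le_iff)
    have "\<tau> * (q \<bullet> v0 - a) \<le> \<tau> * t" using qt tp by simp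
    then have b2: "\<tau> * (q \<bullet> v0 - a) + (norm (q - z))\<^sup>2 / 2 \<le> B" using b by linarith
    have "norm q - norm z \<le> norm (q - z)" by (rule norm_triangle_ineq2)
    from quad_bound[OF norm_ge_zero norm_ge_zero norm_ge_zero tp this norm_ge_zero qv b2]
    have nq: "norm q \<le> R0" unfolding R0_def .
    have "\<tau> * t \<le> B" using b zero_le_power2[of "norm (q - z)"] by linarith
    then have "t \<le> hi" unfolding hi_def using tp by (simp add: field_simps)
    moreover have "lo \<le> t"
    proof -
      have "- R0 * norm v0 \<le> - norm q * norm v0" using nq by (simp add: mult_right_mono)
      then show ?thesis unfolding lo_def using qt qv by linarith
    qed
    ultimately show "p \<in> cball 0 R0 \<times> {lo..hi}" using p nq by auto
  qed
  have cS: "compact S"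
  proof -
    have "compact (cball (0::'u) R0 \<times> {lo..hi})" by (intro compact_Times compact_cball compact_Icc)
    then have "compact ((cball (0::'u) R0 \<times> {lo..hi}) \<inter> S)" using clS by (rule compact_Int_closed)
    moreover have "(cball (0::'u) R0 \<times> {lo..hi}) \<inter> S = S" using sub by blast
    ultimately show ?thesis by simp
  qed
  have u1S: "(u1, c1) \<in> S" unfolding S_def B_def using fin by auto
  have "continuous_on S \<psi>" unfolding \<psi>_def by (intro continuous_intros) auto
  from continuous_attains_inf[OF cS _ this] u1S
  obtain p0 where p0: "p0 \<in> S" and min: "\<And>y. y \<in> S \<Longrightarrow> \<psi> p0 \<le> \<psi> y" by blast
  obtain p t0 where pt: "p0 = (p, t0)" by (cases p0)
  have hp: "hs p \<le> ereal t0" and bp: "\<psi> p0 \<le> B" using p0 unfolding pt S_def \<psi>_def by auto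
  have Phip: "ereal \<tau> * hs p + ereal ((norm (p - z))\<^sup>2 / 2) \<le> ereal (\<psi> p0)"
  proof -
    have "ereal \<tau> * hs p \<le> ereal \<tau> * ereal t0" using hp tp by (intro ereal_mult_left_mono) auto
    then have "ereal \<tau> * hs p + ereal ((norm (p - z))\<^sup>2 / 2) \<le> ereal (\<tau> * t0) + ereal ((norm (p - z))\<^sup>2 / 2)"
      by (intro add_right_mono) simp
    then show ?thesis unfolding pt \<psi>_def by simp
  qed
  show ?thesis
  proof (intro exI allI)
    fix q
    show "ereal \<tau> * hs p + ereal ((norm (p - z))\<^sup>2 / 2) \<le> ereal \<tau> * hs q + ereal ((norm (q - z))\<^sup>2 / 2)"
    proof (cases "ereal \<tau> * hs q + ereal ((norm (q - z))\<^sup>2 / 2) \<ge> ereal B")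
      case True
      then show ?thesis using Phip bp by (meson ereal_less_eq(3) order_trans)
    next
      case False
      have "hs q \<noteq> -\<infinity>" using low[of q] by auto
      moreover have "hs q \<noteq> \<infinity>" using False tp by auto
      ultimately obtain w where w: "hs q = ereal w" by (cases "hs q") auto
      then have "\<tau> * w + (norm (q - z))\<^sup>2 / 2 \<le> B" using False by simp
      then have "(q, w) \<in> S" unfolding S_def using w by auto
      then have "\<psi> p0 \<le> \<psi> (q, w)" by (rule min)
      then show ?thesis using Phip w unfolding \<psi>_def by (simp add: order_trans)
    qed
  qed
qed


lemma small_t:
  fixes X C :: real
  assumes "\<And>t. 0 < t \<Longrightarrow> t < 1 \<Longrightarrow> X \<le> t * C"
  shows "X \<le> 0"
proof (rule ccontr)
  assume "\<not> X \<le> 0"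
  then have X: "X > 0" by simp
  define t where "t = min (1/2) (X / (2 * (\<bar>C\<bar> + 1)))"
  have t0: "t > 0" using X by (simp add: t_def)
  have t1: "t < 1" by (simp add: t_def)
  have "t * C \<le> t * \<bar>C\<bar>" using t0 by (simp add: mult_left_mono)
  also have "\<dots> \<le> X / (2 * (\<bar>C\<bar> + 1)) * \<bar>C\<bar>" unfolding t_def by (intro mult_right_mono) auto
  also have "\<dots> < X"
  proof -
    have "0 \<le> X * \<bar>C\<bar>" using X by simp
    then show ?thesis using X by (simp add: field_simps) (insert \<open>0 \<le> X * \<bar>C\<bar>\<close>, linarith)
  qed
  finally show False using assms[OF t0 t1] by simp
qed

lemma strong_sub_gen:
  fixes hs :: "'u::real_inner \<Rightarrow> ereal"
  assumes conv: "convex {(x, t::real). hs x - ereal (\<mu> / 2 * (norm x)\<^sup>2) \<le> ereal t}"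
    and hp: "hs p = ereal P"
    and loc: "\<And>t W. 0 < t \<Longrightarrow> t < 1 \<Longrightarrow> hs (p + t *\<^sub>R (v - p)) = ereal W \<Longrightarrow> P + t * (g \<bullet> (v - p)) - t\<^sup>2 * C \<le> W"
    and nm: "\<And>u. hs u \<noteq> -\<infinity>"
  shows "hs p + ereal (g \<bullet> (v - p) + \<mu> / 2 * (norm (v - p))\<^sup>2) \<le> hs v"
proof (cases "hs v")
  case PInf then show ?thesis using hp by simp
next
  case MInf then show ?thesis using nm by simp
next
  case (real V)
  define N where "N = (norm (v - p))\<^sup>2"
  have key: "P + g \<bullet> (v - p) + \<mu> / 2 * N - V \<le> t * (C + \<mu> / 2 * N)" if t: "0 < t" "t < 1" for t
  proof -
    define q where "q = p + t *\<^sub>R (v - p)"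
    have m1: "(p, P - \<mu> / 2 * (norm p)\<^sup>2) \<in> {(x, t::real). hs x - ereal (\<mu> / 2 * (norm x)\<^sup>2) \<le> ereal t}"
      using hp by simp
    have m2: "(v, V - \<mu> / 2 * (norm v)\<^sup>2) \<in> {(x, t::real). hs x - ereal (\<mu> / 2 * (norm x)\<^sup>2) \<le> ereal t}"
      using real by simp
    from convexD[OF conv m1 m2, of "1 - t" t] t
    have "((1 - t) *\<^sub>R p + t *\<^sub>R v, (1 - t) * (P - \<mu> / 2 * (norm p)\<^sup>2) + t * (V - \<mu> / 2 * (norm v)\<^sup>2))
       \<in> {(x, t::real). hs x - ereal (\<mu> / 2 * (norm x)\<^sup>2) \<le> ereal t}" by simp
    moreover have "(1 - t) *\<^sub>R p + t *\<^sub>R v = q" unfolding q_def by (simp add: algebra_simps)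
    ultimately have hq: "hs q - ereal (\<mu> / 2 * (norm q)\<^sup>2) \<le> ereal ((1 - t) * (P - \<mu> / 2 * (norm p)\<^sup>2) + t * (V - \<mu> / 2 * (norm v)\<^sup>2))"
      by simp
    obtain W where W: "hs q = ereal W"
    proof (cases "hs q")
      case PInf then show ?thesis using hq by simp
    next
      case MInf then show ?thesis using nm by simp
    qed
    have Wle: "W \<le> (1 - t) * (P - \<mu> / 2 * (norm p)\<^sup>2) + t * (V - \<mu> / 2 * (norm v)\<^sup>2) + \<mu> / 2 * (norm q)\<^sup>2"
      using hq W by simp
    have idq: "(norm q)\<^sup>2 = (1 - t) * (norm p)\<^sup>2 + t * (norm v)\<^sup>2 - t * (1 - t) * N"
      unfolding q_def N_def power2_norm_eq_inner
      by (simp add: inner_add_left inner_add_right inner_diff_left inner_diff_right inner_commute algebra_simps power2_eq_square)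
    have "P + t * (g \<bullet> (v - p)) - t\<^sup>2 * C \<le> W" using loc[OF t, of W] W unfolding q_def by simp
    moreover have "W \<le> (1 - t) * P + t * V - \<mu> / 2 * (t * (1 - t) * N)"
      using Wle unfolding idq by (simp add: field_simps)
    ultimately have "P + t * (g \<bullet> (v - p)) - t\<^sup>2 * C \<le> (1 - t) * P + t * V - \<mu> / 2 * (t * (1 - t) * N)"
      by linarith
    then have "t * (P + g \<bullet> (v - p) + \<mu> / 2 * N - V) \<le> t * (t * (C + \<mu> / 2 * N))"
      by (simp add: algebra_simps power2_eq_square)
    then show ?thesis using t by simp
  qed
  have "P + g \<bullet> (v - p) + \<mu> / 2 * N - V \<le> 0" by (rule small_t[OF key])
  then show ?thesis using hp real unfolding N_def by simp
qed


lemma fconj_nm: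
  fixes h :: "'u::real_inner \<Rightarrow> ereal"
  assumes "proper_fun h"
  shows "fconj h u \<noteq> -\<infinity>"
proof -
  obtain v0 a where "\<And>u. ereal (u \<bullet> v0 - a) \<le> fconj h u" using fconj_lower[OF assms] by blast
  from this[of u] show ?thesis by auto
qed

lemma prox_char:
  fixes h :: "'u::euclidean_space \<Rightarrow> ereal"
  assumes hp: "proper_fun h" and sc: "strongly_convex_fun \<mu> (fconj h)"
    and fin: "fconj h u1 = ereal c1" and tp: "\<tau> > 0"
  shows "\<exists>P. fconj h (prox \<tau> (fconj h) z) = ereal P"
    and "fconj h (prox \<tau> (fconj h) z) + ereal ((1 / \<tau>) * ((z - prox \<tau> (fconj h) z) \<bullet> (v - prox \<tau> (fconj h) z))
            + \<mu> / 2 * (norm (v - prox \<tau> (fconj h) z))\<^sup>2) \<le> fconj h v"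
proof -
  define hs where "hs = fconj h"
  define p where "p = prox \<tau> hs z"
  obtain v0 a where low: "\<And>u. ereal (u \<bullet> v0 - a) \<le> hs u" using fconj_lower[OF hp] unfolding hs_def by blast
  have "\<exists>p. \<forall>q. ereal \<tau> * hs p + ereal ((norm (p - z))\<^sup>2 / 2) \<le> ereal \<tau> * hs q + ereal ((norm (q - z))\<^sup>2 / 2)"
    by (rule prox_exists[OF low _ _ tp]) (use fconj_closed[OF hp] fin in \<open>auto simp: hs_def\<close>)
  then have minp: "\<And>q. ereal \<tau> * hs p + ereal ((norm (p - z))\<^sup>2 / 2) \<le> ereal \<tau> * hs q + ereal ((norm (q - z))\<^sup>2 / 2)"
    unfolding p_def prox_def by (rule someI_ex[where P="\<lambda>p. \<forall>q. ereal \<tau> * hs p + ereal ((norm (p - z))\<^sup>2 / 2) \<le> ereal \<tau> * hs q + ereal ((norm (q - z))\<^sup>2 / 2)", THEN spec])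
  have nm: "\<And>u. hs u \<noteq> -\<infinity>" unfolding hs_def by (rule fconj_nm[OF hp])
  obtain P where P: "hs p = ereal P"
  proof (cases "hs p")
    case PInf
    have "ereal \<tau> * hs p + ereal ((norm (p - z))\<^sup>2 / 2) \<le> ereal \<tau> * hs u1 + ereal ((norm (u1 - z))\<^sup>2 / 2)" by (rule minp)
    then show ?thesis using PInf tp fin unfolding hs_def by simp
  next
    case MInf then show ?thesis using nm by simp
  qed
  then show "\<exists>P. fconj h (prox \<tau> (fconj h) z) = ereal P" unfolding hs_def p_def by blast
  have conv: "convex {(x, t::real). hs x - ereal (\<mu> / 2 * (norm x)\<^sup>2) \<le> ereal t}"
    using sc unfolding strongly_convex_fun_def convex_fun_def hs_def .
  have "hs p + ereal (((1 / \<tau>) *\<^sub>R (z - p)) \<bullet> (v - p) + \<mu> / 2 * (norm (v - p))\<^sup>2) \<le> hs v"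
  proof (rule strong_sub_gen[OF conv P _ nm])
    fix t W assume t: "0 < t" "t < 1" and W: "hs (p + t *\<^sub>R (v - p)) = ereal W"
    define q where "q = p + t *\<^sub>R (v - p)"
    have "ereal \<tau> * hs p + ereal ((norm (p - z))\<^sup>2 / 2) \<le> ereal \<tau> * hs q + ereal ((norm (q - z))\<^sup>2 / 2)" by (rule minp)
    then have m: "\<tau> * P + (norm (p - z))\<^sup>2 / 2 \<le> \<tau> * W + (norm (q - z))\<^sup>2 / 2" using P W unfolding q_def by simp
    have "(norm (q - z))\<^sup>2 = (norm (p - z))\<^sup>2 + 2 * t * ((p - z) \<bullet> (v - p)) + t\<^sup>2 * (norm (v - p))\<^sup>2"
      unfolding q_def power2_norm_eq_inner
      by (simp add: inner_add_left inner_add_right inner_diff_left inner_diff_right inner_commute algebra_simps power2_eq_square)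
    with m have "\<tau> * P \<le> \<tau> * W + t * ((p - z) \<bullet> (v - p)) + t\<^sup>2 * (norm (v - p))\<^sup>2 / 2" by (simp add: field_simps)
    then have "\<tau> * (P + t * (((1 / \<tau>) *\<^sub>R (z - p)) \<bullet> (v - p)) - t\<^sup>2 * ((norm (v - p))\<^sup>2 / (2 * \<tau>))) \<le> \<tau> * W"
      using tp by (simp add: algebra_simps inner_diff_left inner_diff_right)
    then show "P + t * (((1 / \<tau>) *\<^sub>R (z - p)) \<bullet> (v - p)) - t\<^sup>2 * ((norm (v - p))\<^sup>2 / (2 * \<tau>)) \<le> W"
      using tp by simp
  qed
  then show "fconj h (prox \<tau> (fconj h) z) + ereal ((1 / \<tau>) * ((z - prox \<tau> (fconj h) z) \<bullet> (v - prox \<tau> (fconj h) z))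
            + \<mu> / 2 * (norm (v - prox \<tau> (fconj h) z))\<^sup>2) \<le> fconj h v"
    unfolding hs_def p_def by simp
qed

lemma subdiff_strong:
  fixes h :: "'u::real_inner \<Rightarrow> ereal"
  assumes hp: "proper_fun h" and sc: "strongly_convex_fun \<mu> (fconj h)"
    and g: "g \<in> subdiff (fconj h) u"
  shows "\<exists>U. fconj h u = ereal U"
    and "fconj h u + ereal (g \<bullet> (v - u) + \<mu> / 2 * (norm (v - u))\<^sup>2) \<le> fconj h v"
proof -
  define hs where "hs = fconj h"
  have nm: "\<And>u. hs u \<noteq> -\<infinity>" unfolding hs_def by (rule fconj_nm[OF hp])
  have g': "hs u \<noteq> \<infinity>" "\<And>v. hs u + ereal (g \<bullet> (v - u)) \<le> hs v" using g unfolding subdiff_def hs_def by auto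
  obtain U where U: "hs u = ereal U" using g'(1) nm[of u] by (cases "hs u") auto
  then show "\<exists>U. fconj h u = ereal U" unfolding hs_def by blast
  have conv: "convex {(x, t::real). hs x - ereal (\<mu> / 2 * (norm x)\<^sup>2) \<le> ereal t}"
    using sc unfolding strongly_convex_fun_def convex_fun_def hs_def .
  have "hs u + ereal (g \<bullet> (v - u) + \<mu> / 2 * (norm (v - u))\<^sup>2) \<le> hs v"
  proof (rule strong_sub_gen[OF conv U _ nm, where C=0])
    fix t W assume t: "0 < t" "t < 1" and W: "hs (u + t *\<^sub>R (v - u)) = ereal W"
    from g'(2)[of "u + t *\<^sub>R (v - u)"] W U show "U + t * (g \<bullet> (v - u)) - t\<^sup>2 * 0 \<le> W" by simp
  qed
  then show "fconj h u + ereal (g \<bullet> (v - u) + \<mu> / 2 * (norm (v - u))\<^sup>2) \<le> fconj h v" unfolding hs_def .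
qed

lemma strong_mono:
  fixes hs :: "'u::real_inner \<Rightarrow> ereal"
  assumes "hs p1 = ereal P1" "hs p2 = ereal P2"
    and "hs p1 + ereal (g1 \<bullet> (p2 - p1) + \<mu> / 2 * (norm (p2 - p1))\<^sup>2) \<le> hs p2"
    and "hs p2 + ereal (g2 \<bullet> (p1 - p2) + \<mu> / 2 * (norm (p1 - p2))\<^sup>2) \<le> hs p1"
  shows "\<mu> * (norm (p1 - p2))\<^sup>2 \<le> (g1 - g2) \<bullet> (p1 - p2)"
proof -
  have a: "P1 + g1 \<bullet> (p2 - p1) + \<mu> / 2 * (norm (p2 - p1))\<^sup>2 \<le> P2" using assms by simp
  have b: "P2 + g2 \<bullet> (p1 - p2) + \<mu> / 2 * (norm (p1 - p2))\<^sup>2 \<le> P1" using assms by simp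
  have "norm (p2 - p1) = norm (p1 - p2)" by (rule norm_minus_commute)
  with a b show ?thesis by (simp add: inner_diff_left inner_diff_right algebra_simps)
qed


lemma quad_zero:
  fixes B C :: real
  assumes B: "B \<ge> 0" and all: "\<And>t. 0 \<le> 2 * t * B + t\<^sup>2 * C"
  shows "B = 0"
proof (rule ccontr)
  assume "B \<noteq> 0"
  then have Bp: "B > 0" using B by simp
  define t where "t = - B / (\<bar>C\<bar> + 1)"
  have d: "\<bar>C\<bar> + 1 > 0" by simp
  have "t\<^sup>2 * C \<le> t\<^sup>2 * \<bar>C\<bar>" by (intro mult_left_mono) auto
  also have "\<dots> = B\<^sup>2 * \<bar>C\<bar> / (\<bar>C\<bar> + 1)\<^sup>2" unfolding t_def by (simp add: power_divide)
  also have "\<dots> \<le> B\<^sup>2 * (\<bar>C\<bar> + 1) / (\<bar>C\<bar> + 1)\<^sup>2"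
    by (intro divide_right_mono mult_left_mono) auto
  also have "\<dots> = B\<^sup>2 / (\<bar>C\<bar> + 1)" using d by (simp add: power2_eq_square)
  finally have x: "2 * t * B + t\<^sup>2 * C \<le> 2 * t * B + B\<^sup>2 / (\<bar>C\<bar> + 1)" by simp
  have "2 * t * B = - 2 * (B\<^sup>2 / (\<bar>C\<bar> + 1))" unfolding t_def by (simp add: power2_eq_square)
  with x have "2 * t * B + t\<^sup>2 * C \<le> - (B\<^sup>2 / (\<bar>C\<bar> + 1))" by linarith
  moreover have "B\<^sup>2 / (\<bar>C\<bar> + 1) > 0" using Bp d by simp
  ultimately show False using all[of t] by simp
qed

lemma norm_add_scale_sq:
  fixes a b :: "'a::real_inner"
  shows "(norm (a + t *\<^sub>R b))\<^sup>2 = (norm a)\<^sup>2 + 2 * t * (a \<bullet> b) + t\<^sup>2 * (norm b)\<^sup>2"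
  unfolding power2_norm_eq_inner
  by (simp add: inner_add_left inner_add_right inner_commute power2_eq_square algebra_simps)

lemma eig_facts:
  fixes K :: "'x::euclidean_space \<Rightarrow> 'u::euclidean_space"
  assumes K: "linear K"
  shows "lambda_min (K \<circ> adjoint K) \<ge> 0"
    and "lambda_min (K \<circ> adjoint K) * (norm v)\<^sup>2 \<le> (norm (adjoint K v))\<^sup>2"
proof -
  define A where "A = K \<circ> adjoint K"
  define S where "S = {l. \<exists>v. v \<noteq> 0 \<and> A v = l *\<^sub>R v}"
  define q where "q v = (norm (adjoint K v))\<^sup>2" for v
  have Aw: "A v \<bullet> w = adjoint K v \<bullet> adjoint K w" for v w
    unfolding A_def using adjoint_works[OF K, of "adjoint K v" w] by simp
  have Sq: "l * (norm v)\<^sup>2 = q v" if "A v = l *\<^sub>R v" for l v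
  proof -
    have "q v = A v \<bullet> v" unfolding q_def Aw power2_norm_eq_inner by (simp add: inner_commute)
    also have "\<dots> = l * (norm v)\<^sup>2" using that by (simp add: power2_norm_eq_inner)
    finally show ?thesis by simp
  qed
  have Snn: "l \<ge> 0" if "l \<in> S" for l
  proof -
    have "\<exists>v. v \<noteq> 0 \<and> A v = l *\<^sub>R v" using that by (simp add: S_def)
    then obtain v where v: "v \<noteq> 0" "A v = l *\<^sub>R v" by blast
    have "q v \<ge> 0" unfolding q_def by simp
    then have a: "0 \<le> l * (norm v)\<^sup>2" using Sq[OF v(2)] by simp
    have b: "(norm v)\<^sup>2 > 0" using v(1) by simp
    show ?thesis
    proof (rule ccontr)
      assume "\<not> l \<ge> 0"
      then have "l * (norm v)\<^sup>2 < 0" using b by (simp add: mult_neg_pos)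
      then show False using a by simp
    qed
  qed
  have finS: "finite S"
  proof -
    define ev where "ev l = (SOME v. v \<noteq> 0 \<and> A v = l *\<^sub>R v)" for l
    have ev: "ev l \<noteq> 0 \<and> A (ev l) = l *\<^sub>R ev l" if "l \<in> S" for l
    proof -
      have "\<exists>v. v \<noteq> 0 \<and> A v = l *\<^sub>R v" using that by (simp add: S_def)
      then show ?thesis unfolding ev_def by (rule someI_ex)
    qed
    have inj: "inj_on ev S"
    proof (rule inj_onI)
      fix l1 l2 assume "l1 \<in> S" "l2 \<in> S" "ev l1 = ev l2"
      then have "l1 *\<^sub>R ev l1 = l2 *\<^sub>R ev l1" using ev by metis
      then show "l1 = l2" using ev \<open>l1 \<in> S\<close> by (simp add: scaleR_cancel_right)
    qed
    have orth: "pairwise orthogonal (ev ` S)"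
    proof (rule pairwiseI)
      fix a b assume "a \<in> ev ` S" "b \<in> ev ` S" "a \<noteq> b"
      then obtain l1 l2 where l: "l1 \<in> S" "l2 \<in> S" "a = ev l1" "b = ev l2" by blast
      with \<open>a \<noteq> b\<close> have ne: "l1 \<noteq> l2" by blast
      have "l1 * (a \<bullet> b) = A a \<bullet> b" using ev[OF l(1)] l(3) by simp
      also have "\<dots> = adjoint K a \<bullet> adjoint K b" by (rule Aw)
      also have "\<dots> = A b \<bullet> a" unfolding Aw by (rule inner_commute)
      also have "\<dots> = l2 * (a \<bullet> b)" using ev[OF l(2)] l(4) by (simp add: inner_commute)
      finally have "(l1 - l2) * (a \<bullet> b) = 0" by (simp add: algebra_simps)
      then show "orthogonal a b" using ne unfolding orthogonal_def by simp
    qed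
    have "0 \<notin> ev ` S" using ev by auto
    from pairwise_orthogonal_independent[OF orth this]
    have "finite (ev ` S)" using independent_bound_general by blast
    then show ?thesis using inj by (rule finite_imageD)
  qed
  \<comment> \<open>Rayleigh quotient minimiser\<close>
  have lin: "linear (adjoint K)" by (rule adjoint_linear[OF K])
  have cq: "continuous_on (sphere 0 1) q" unfolding q_def
    using lin by (intro continuous_intros linear_continuous_on linear_conv_bounded_linear[THEN iffD1])
  obtain b :: 'u where b: "b \<in> Basis" using nonempty_Basis by blast
  have "b \<in> sphere 0 1" using b by simp
  then obtain v0 where v0: "v0 \<in> sphere 0 1" and vmin: "\<And>w. w \<in> sphere 0 1 \<Longrightarrow> q v0 \<le> q w"
    using continuous_attains_inf[OF compact_sphere _ cq] by blast
  define m where "m = q v0"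
  have qscale: "q (c *\<^sub>R w) = c\<^sup>2 * q w" for c w
    unfolding q_def using linear_cmul[OF lin] by (simp add: power_mult_distrib)
  have qge: "m * (norm w)\<^sup>2 \<le> q w" for w
  proof (cases "w = 0")
    case True then show ?thesis by (simp add: q_def linear_0[OF lin])
  next
    case False
    have "(inverse (norm w)) *\<^sub>R w \<in> sphere 0 1" using False by simp
    then have "m \<le> q ((inverse (norm w)) *\<^sub>R w)" unfolding m_def by (rule vmin)
    also have "\<dots> = q w / (norm w)\<^sup>2" unfolding qscale by (simp add: power_inverse field_simps)
    finally show ?thesis using False by (simp add: field_simps)
  qed
  have nv0: "norm v0 = 1" using v0 by simp
  define e where "e = A v0 - m *\<^sub>R v0"
  have "\<And>t. 0 \<le> 2 * t * (e \<bullet> e) + t\<^sup>2 * (q e - m * (norm e)\<^sup>2)"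
  proof -
    fix t :: real
    have "m * (norm (v0 + t *\<^sub>R e))\<^sup>2 \<le> q (v0 + t *\<^sub>R e)" by (rule qge)
    moreover have "q (v0 + t *\<^sub>R e) = q v0 + 2 * t * (A v0 \<bullet> e) + t\<^sup>2 * q e"
    proof -
      have "adjoint K (v0 + t *\<^sub>R e) = adjoint K v0 + t *\<^sub>R adjoint K e"
        by (simp add: linear_add[OF lin] linear_cmul[OF lin])
      then show ?thesis unfolding q_def Aw by (simp add: norm_add_scale_sq)
    qed
    moreover have "(norm (v0 + t *\<^sub>R e))\<^sup>2 = 1 + 2 * t * (v0 \<bullet> e) + t\<^sup>2 * (norm e)\<^sup>2"
      using nv0 by (simp add: norm_add_scale_sq)
    moreover have "A v0 \<bullet> e = e \<bullet> e + m * (v0 \<bullet> e)" unfolding e_def by (simp add: inner_diff_left algebra_simps)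
    ultimately have "m * (1 + 2 * t * (v0 \<bullet> e) + t\<^sup>2 * (norm e)\<^sup>2) \<le> m + 2 * t * (e \<bullet> e + m * (v0 \<bullet> e)) + t\<^sup>2 * q e"
      unfolding m_def by simp
    then show "0 \<le> 2 * t * (e \<bullet> e) + t\<^sup>2 * (q e - m * (norm e)\<^sup>2)"
      by (simp add: ring_distribs mult.left_commute)
  qed
  from quad_zero[OF inner_ge_zero this] have "e = 0" by simp
  then have "A v0 = m *\<^sub>R v0" unfolding e_def by simp
  moreover have "v0 \<noteq> 0" using nv0 by auto
  ultimately have mS: "m \<in> S" unfolding S_def by blast
  then have Sne: "S \<noteq> {}" by blast
  have "Min S \<in> S" using finS Sne by (rule Min_in)
  then show "lambda_min (K \<circ> adjoint K) \<ge> 0" using Snn unfolding lambda_min_def A_def[symmetric] S_def[symmetric] by blast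
  have "Min S \<le> m" using finS mS by (rule Min_le)
  then have "Min S * (norm v)\<^sup>2 \<le> m * (norm v)\<^sup>2" by (intro mult_right_mono) auto
  also have "\<dots> \<le> q v" by (rule qge)
  finally show "lambda_min (K \<circ> adjoint K) * (norm v)\<^sup>2 \<le> (norm (adjoint K v))\<^sup>2"
    unfolding lambda_min_def A_def[symmetric] S_def[symmetric] q_def .
qed


lemma scalar_step0:
  fixes \<gamma> \<tau> \<mu> \<omega> \<zeta> \<omega>r lam c c1 nK2 W2 WD KD2 KDE KE2 KR2 E2 D2 R2 ED X2 a2 it ig :: real
  assumes g: "\<gamma> > 0" and t: "\<tau> > 0" and m: "\<mu> \<ge> 0" and om: "\<omega> \<ge> 0" and z: "\<zeta> \<le> 1"
    and it: "it * \<tau> = 1" and ig: "ig * \<gamma> = 1"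
    and a2: "ig * a2 = ig * W2 - 2 * WD + \<gamma> * KD2"
    and KR2: "KR2 = KD2 - 2 * KDE + KE2"
    and ED: "2 * ED - D2 = E2 - R2"
    and prox: "\<mu> * D2 \<le> it * (ED - D2) + WD - \<gamma> * KDE"
    and W2: "W2 \<le> c1 * X2" and KR2n: "KR2 \<le> nK2 * R2" and lam: "lam * E2 \<le> KE2"
    and R2: "R2 \<ge> 0" and X2: "X2 \<ge> 0" and E2: "E2 \<ge> 0"
    and step: "\<gamma> * \<tau> * ((1 - \<zeta>) * nK2 + \<omega>r) \<le> 1"
    and c1: "c1 \<le> c"
    and c3: "(it + 2 * \<mu>) * \<omega> + it - \<gamma> * lam \<le> c * ((1 + \<omega>) * (it + 2 * \<mu>))"
  shows "ig * a2 + \<gamma> * (\<omega>r * R2 - \<zeta> * KR2) + (it + 2 * \<mu>) * (\<omega> * E2 + D2)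
         \<le> c * (ig * X2 + (1 + \<omega>) * (it + 2 * \<mu>) * E2)"
proof -
  have i0: "it > 0" using it t by (metis mult_pos_pos zero_less_one less_eq_real_def mult_le_0_iff not_le)
  have ig0: "ig > 0" using ig g by (metis mult_pos_pos zero_less_one less_eq_real_def mult_le_0_iff not_le)
  have e1: "it * (2 * ED - D2) = it * (E2 - R2)" using ED by simp
  have p2: "(it + 2 * \<mu>) * D2 \<le> it * (E2 - R2) + 2 * WD - 2 * \<gamma> * KDE"
    using prox e1 by (simp add: algebra_simps)
  have L1: "ig * a2 + \<gamma> * (\<omega>r * R2 - \<zeta> * KR2) + (it + 2 * \<mu>) * (\<omega> * E2 + D2)
     \<le> ig * W2 + \<gamma> * (1 - \<zeta>) * KR2 + (\<gamma> * \<omega>r - it) * R2 - \<gamma> * KE2 + ((it + 2 * \<mu>) * \<omega> + it) * E2"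
  proof -
    have "\<gamma> * KD2 - 2 * \<gamma> * KDE = \<gamma> * KR2 - \<gamma> * KE2" unfolding KR2 by (simp add: algebra_simps)
    then show ?thesis using p2 unfolding a2 by (simp add: algebra_simps)
  qed
  have br: "\<gamma> * (1 - \<zeta>) * nK2 + \<gamma> * \<omega>r - it \<le> 0"
  proof -
    have "\<tau> * (\<gamma> * (1 - \<zeta>) * nK2 + \<gamma> * \<omega>r - it) = \<gamma> * \<tau> * ((1 - \<zeta>) * nK2 + \<omega>r) - 1"
      using it by (simp add: algebra_simps)
    then have "\<tau> * (\<gamma> * (1 - \<zeta>) * nK2 + \<gamma> * \<omega>r - it) \<le> 0" using step by simp
    then show ?thesis using t by (simp add: mult_le_0_iff)
  qed
  have L2: "\<gamma> * (1 - \<zeta>) * KR2 + (\<gamma> * \<omega>r - it) * R2 \<le> 0"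
  proof -
    have "\<gamma> * (1 - \<zeta>) * KR2 \<le> \<gamma> * (1 - \<zeta>) * (nK2 * R2)" using g z KR2n by (intro mult_left_mono) auto
    moreover have "(\<gamma> * (1 - \<zeta>) * nK2 + \<gamma> * \<omega>r - it) * R2 \<le> 0" using br R2 by (simp add: mult_le_0_iff)
    ultimately show ?thesis by (simp add: algebra_simps)
  qed
  have L3: "- \<gamma> * KE2 \<le> - \<gamma> * lam * E2" using lam g by simp
  have W2': "ig * W2 \<le> c * (ig * X2)"
  proof -
    have "ig * W2 \<le> ig * (c1 * X2)" using W2 ig0 by (intro mult_left_mono) auto
    also have "\<dots> \<le> ig * (c * X2)" using c1 X2 ig0 by (intro mult_left_mono mult_right_mono) auto
    finally show ?thesis by (simp add: mult_ac)
  qed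
  have E3: "((it + 2 * \<mu>) * \<omega> + it - \<gamma> * lam) * E2 \<le> c * ((1 + \<omega>) * (it + 2 * \<mu>) * E2)"
    using mult_right_mono[OF c3 E2] by (simp add: mult.assoc)
  show ?thesis using L1 L2 L3 W2' E3 by (simp add: algebra_simps)
qed


lemma det_step:
  fixes K :: "'x::euclidean_space \<Rightarrow> 'u::euclidean_space" and gf :: "'x \<Rightarrow> 'x"
  assumes K: "linear K"
    and g: "\<gamma> > 0" and t: "\<tau> > 0" and m: "\<mu> \<ge> 0" and om: "\<omega> \<ge> 0" and z: "\<zeta> \<le> 1"
    and xh: "xh = x - \<gamma> *\<^sub>R gf x - \<gamma> *\<^sub>R adjoint K u"
    and sad: "gf xs + adjoint K us = 0"
    and prox: "\<mu> * (norm (p - us))\<^sup>2 \<le> ((1 / \<tau>) *\<^sub>R (u + \<tau> *\<^sub>R K xh - p) - K xs) \<bullet> (p - us)"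
    and W2: "(norm (x - \<gamma> *\<^sub>R gf x - (xs - \<gamma> *\<^sub>R gf xs)))\<^sup>2 \<le> c1 * (norm (x - xs))\<^sup>2"
    and KRn: "(norm (adjoint K (p - u)))\<^sup>2 \<le> nK2 * (norm (p - u))\<^sup>2"
    and lam: "lam * (norm (u - us))\<^sup>2 \<le> (norm (adjoint K (u - us)))\<^sup>2"
    and step: "\<gamma> * \<tau> * ((1 - \<zeta>) * nK2 + \<omega>r) \<le> 1"
    and c1: "c1 \<le> c"
    and c3: "1 - (2 * \<tau> * \<mu> + \<gamma> * \<tau> * lam) / ((1 + \<omega>) * (1 + 2 * \<tau> * \<mu>)) \<le> c"
  shows "(1 / \<gamma>) * (norm (xh - xs - \<gamma> *\<^sub>R adjoint K (p - u)))\<^sup>2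
           + \<gamma> * (\<omega>r * (norm (p - u))\<^sup>2 - \<zeta> * (norm (adjoint K (p - u)))\<^sup>2)
           + (1 / \<tau> + 2 * \<mu>) * (\<omega> * (norm (u - us))\<^sup>2 + (norm (p - us))\<^sup>2)
         \<le> c * ((1 / \<gamma>) * (norm (x - xs))\<^sup>2 + (1 + \<omega>) * (1 / \<tau> + 2 * \<mu>) * (norm (u - us))\<^sup>2)"
proof -
  define it where "it = 1 / \<tau>"
  define ig where "ig = 1 / \<gamma>"
  define w where "w = x - \<gamma> *\<^sub>R gf x - (xs - \<gamma> *\<^sub>R gf xs)"
  define e where "e = u - us"
  define \<delta> where "\<delta> = p - us"
  define Ks where "Ks = adjoint K"
  have lin: "linear Ks" unfolding Ks_def by (rule adjoint_linear[OF K])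
  have adj: "K a \<bullet> b = a \<bullet> Ks b" for a b unfolding Ks_def by (simp add: adjoint_works[OF K])
  have pu: "p - u = \<delta> - e" unfolding \<delta>_def e_def by simp
  have Kpu: "Ks (p - u) = Ks \<delta> - Ks e" unfolding pu by (rule linear_diff[OF lin])
  have xsid: "xs = xs - \<gamma> *\<^sub>R gf xs - \<gamma> *\<^sub>R Ks us"
  proof -
    have "\<gamma> *\<^sub>R gf xs + \<gamma> *\<^sub>R Ks us = \<gamma> *\<^sub>R (gf xs + Ks us)" by (simp add: scaleR_right_distrib)
    also have "\<dots> = 0" using sad unfolding Ks_def by simp
    finally show ?thesis by (simp add: algebra_simps)
  qed
  have Ksu: "Ks u - Ks us = Ks e" unfolding e_def by (simp add: linear_diff[OF lin])
  have xhxs: "xh - xs = w - \<gamma> *\<^sub>R Ks e"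
  proof -
    have "xh - xs = x - \<gamma> *\<^sub>R gf x - \<gamma> *\<^sub>R Ks u - (xs - \<gamma> *\<^sub>R gf xs - \<gamma> *\<^sub>R Ks us)"
      using xh xsid unfolding Ks_def by simp
    also have "\<dots> = w - \<gamma> *\<^sub>R (Ks u - Ks us)" unfolding w_def by (simp add: algebra_simps)
    finally show ?thesis unfolding Ksu .
  qed
  have aeq: "xh - xs - \<gamma> *\<^sub>R Ks (p - u) = w - \<gamma> *\<^sub>R Ks \<delta>"
    unfolding xhxs Kpu by (simp add: algebra_simps)
  have nsq: "(norm (a - b))\<^sup>2 = (norm a)\<^sup>2 - 2 * (a \<bullet> b) + (norm b)\<^sup>2" for a b :: "'y::real_inner"
    unfolding power2_norm_eq_inner by (simp add: inner_diff_left inner_diff_right inner_commute)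
  have a2: "ig * (norm (xh - xs - \<gamma> *\<^sub>R Ks (p - u)))\<^sup>2 = ig * (norm w)\<^sup>2 - 2 * (w \<bullet> Ks \<delta>) + \<gamma> * (norm (Ks \<delta>))\<^sup>2"
    unfolding aeq nsq ig_def using g by (simp add: field_simps power2_eq_square)
  have KR2: "(norm (Ks (p - u)))\<^sup>2 = (norm (Ks \<delta>))\<^sup>2 - 2 * (Ks \<delta> \<bullet> Ks e) + (norm (Ks e))\<^sup>2"
    unfolding Kpu nsq ..
  have ED: "2 * (e \<bullet> \<delta>) - (norm \<delta>)\<^sup>2 = (norm e)\<^sup>2 - (norm (p - u))\<^sup>2"
    unfolding pu nsq by (simp add: inner_commute)
  have proxeq: "((1 / \<tau>) *\<^sub>R (u + \<tau> *\<^sub>R K xh - p) - K xs) \<bullet> (p - us)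
      = it * (e \<bullet> \<delta> - (norm \<delta>)\<^sup>2) + w \<bullet> Ks \<delta> - \<gamma> * (Ks \<delta> \<bullet> Ks e)"
  proof -
    have "(1 / \<tau>) *\<^sub>R (u + \<tau> *\<^sub>R K xh - p) - K xs = it *\<^sub>R (e - \<delta>) + K (xh - xs)"
      unfolding it_def e_def \<delta>_def using t by (simp add: algebra_simps linear_diff[OF K])
    then have "((1 / \<tau>) *\<^sub>R (u + \<tau> *\<^sub>R K xh - p) - K xs) \<bullet> (p - us) = it * ((e - \<delta>) \<bullet> \<delta>) + (xh - xs) \<bullet> Ks \<delta>"
      unfolding \<delta>_def[symmetric] by (simp add: inner_add_left adj)
    also have "\<dots> = it * (e \<bullet> \<delta> - (norm \<delta>)\<^sup>2) + w \<bullet> Ks \<delta> - \<gamma> * (Ks \<delta> \<bullet> Ks e)"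
      unfolding xhxs by (simp add: inner_diff_left inner_diff_right power2_norm_eq_inner inner_commute)
    finally show ?thesis .
  qed
  have c3': "(it + 2 * \<mu>) * \<omega> + it - \<gamma> * lam \<le> c * ((1 + \<omega>) * (it + 2 * \<mu>))"
  proof -
    have d: "(1 + \<omega>) * (1 + 2 * \<tau> * \<mu>) > 0" using om t m by (simp add: add_pos_nonneg)
    have id3: "(1 - (2 * \<tau> * \<mu> + \<gamma> * \<tau> * lam) / ((1 + \<omega>) * (1 + 2 * \<tau> * \<mu>))) * ((1 + \<omega>) * (it + 2 * \<mu>))
      = (it + 2 * \<mu>) * \<omega> + it - \<gamma> * lam"
    proof -
      define D where "D = (1 + \<omega>) * (1 + 2 * \<tau> * \<mu>)"
      define N where "N = 2 * \<tau> * \<mu> + \<gamma> * \<tau> * lam"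
      have h1: "(1 + \<omega>) * (it + 2 * \<mu>) = D / \<tau>" unfolding it_def D_def using t by (simp add: field_simps)
      have h2: "(1 - N / D) * (D / \<tau>) = (D - N) / \<tau>" using d t unfolding D_def[symmetric] by (simp add: field_simps)
      have h3: "(D - N) / \<tau> = (it + 2 * \<mu>) * \<omega> + it - \<gamma> * lam"
      proof -
        have "D - N = \<tau> * ((it + 2 * \<mu>) * \<omega> + it - \<gamma> * lam)"
          unfolding D_def N_def it_def using t by (simp add: algebra_simps)
        then show ?thesis using t by simp
      qed
      show ?thesis unfolding D_def[symmetric] N_def[symmetric] h1 h2 h3 ..
    qed
    have "(1 + \<omega>) * (it + 2 * \<mu>) \<ge> 0" unfolding it_def using om t m by simp
    from mult_right_mono[OF c3 this] show ?thesis unfolding id3 .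
  qed
  have "ig * (norm (xh - xs - \<gamma> *\<^sub>R Ks (p - u)))\<^sup>2 + \<gamma> * (\<omega>r * (norm (p - u))\<^sup>2 - \<zeta> * (norm (Ks (p - u)))\<^sup>2)
        + (it + 2 * \<mu>) * (\<omega> * (norm e)\<^sup>2 + (norm \<delta>)\<^sup>2)
      \<le> c * (ig * (norm (x - xs))\<^sup>2 + (1 + \<omega>) * (it + 2 * \<mu>) * (norm e)\<^sup>2)"
  proof (rule scalar_step0[OF g t m om z _ _ a2 KR2 ED _ _ _ _ _ _ _ step c1 c3'])
    show "it * \<tau> = 1" unfolding it_def using t by simp
    show "ig * \<gamma> = 1" unfolding ig_def using g by simp
    show "\<mu> * (norm \<delta>)\<^sup>2 \<le> it * (e \<bullet> \<delta> - (norm \<delta>)\<^sup>2) + w \<bullet> Ks \<delta> - \<gamma> * (Ks \<delta> \<bullet> Ks e)"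
      using prox unfolding proxeq \<delta>_def .
    show "(norm w)\<^sup>2 \<le> c1 * (norm (x - xs))\<^sup>2" using W2 unfolding w_def .
    show "(norm (Ks (p - u)))\<^sup>2 \<le> nK2 * (norm (p - u))\<^sup>2" using KRn unfolding Ks_def .
    show "lam * (norm e)\<^sup>2 \<le> (norm (Ks e))\<^sup>2" using lam unfolding Ks_def e_def .
  qed auto
  then show ?thesis unfolding it_def ig_def e_def \<delta>_def Ks_def by simp
qed


locale rp =
  fixes K :: "'x::euclidean_space \<Rightarrow> 'u::euclidean_space"
    and f :: "'x \<Rightarrow> real" and gf :: "'x \<Rightarrow> 'x"
    and h :: "'u \<Rightarrow> ereal"
    and Lf \<mu>f \<mu>h \<gamma> \<tau> om omran \<zeta> :: real
    and xs :: 'x and us :: 'u and x0 :: 'x and u0 :: 'u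
    and M :: "'s measure"
    and x xhat :: "nat \<Rightarrow> 's \<Rightarrow> 'x" and u r Rr :: "nat \<Rightarrow> 's \<Rightarrow> 'u"
  assumes K_lin: "linear K"
    and f_grad: "\<And>y. (f has_derivative (\<lambda>d. gf y \<bullet> d)) (at y)"
    and f_smooth: "\<And>y z. norm (gf y - gf z) \<le> Lf * norm (y - z)"
    and f_strong: "convex_on UNIV (\<lambda>y. f y - \<mu>f / 2 * (norm y)\<^sup>2)"
    and h_proper: "proper_fun h"
    and hs_strong: "\<mu>h \<ge> 0" "strongly_convex_fun \<mu>h (fconj h)"
    and saddle: "gf xs + adjoint K us = 0" "K xs \<in> subdiff (fconj h) us"
    and \<mu>f_pos: "\<mu>f > 0"
    and lam_or_\<mu>h: "lambda_min (K \<circ> adjoint K) > 0 \<or> \<mu>h > 0"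
    and \<gamma>: "0 < \<gamma>" "\<gamma> < 2 / Lf" and \<tau>: "\<tau> > 0"
    and stepsize: "\<gamma> * \<tau> * ((1 - \<zeta>) * (onorm K)\<^sup>2 + omran) \<le> 1"
    and om: "om \<ge> 0" and omran: "omran \<ge> 0" and \<zeta>: "0 \<le> \<zeta>" "\<zeta> \<le> 1"
    and M: "prob_space M"
    and init: "\<And>s. s \<in> space M \<Longrightarrow> x 0 s = x0 \<and> u 0 s = u0"
    and xhat_def: "\<And>t s. s \<in> space M \<Longrightarrow>
           xhat t s = x t s - \<gamma> *\<^sub>R gf (x t s) - \<gamma> *\<^sub>R adjoint K (u t s)"
    and r_def: "\<And>t s. s \<in> space M \<Longrightarrow>
           r t s = prox \<tau> (fconj h) (u t s + \<tau> *\<^sub>R K (xhat t s)) - u t s"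
    and u_step: "\<And>t s. s \<in> space M \<Longrightarrow> u (Suc t) s = u t s + (1 / (1 + om)) *\<^sub>R Rr t s"
    and x_step: "\<And>t s. s \<in> space M \<Longrightarrow>
           x (Suc t) s = xhat t s - (\<gamma> * (1 + om)) *\<^sub>R (adjoint K (u (Suc t) s) - adjoint K (u t s))"
    and R_meas: "\<And>t. Rr t \<in> borel_measurable M"
    and R_int: "\<And>t. integrable M (Rr t)"
    and R_unbiased: "\<And>t b. b \<in> Basis \<Longrightarrow>
           AE s in M. real_cond_exp M (natural_filtration M (\<lambda>i s. (x i s, u i s)) t) (\<lambda>s'. Rr t s' \<bullet> b) s = r t s \<bullet> b"
    and R_var: "\<And>t. AE s in M. nn_cond_exp M (natural_filtration M (\<lambda>i s. (x i s, u i s)) t) (\<lambda>s'. ennreal ((norm (Rr t s' - r t s'))\<^sup>2)) s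
                               \<le> ennreal (om * (norm (r t s))\<^sup>2)"
    and R_var_K: "\<And>t. AE s in M.
           nn_cond_exp M (natural_filtration M (\<lambda>i s. (x i s, u i s)) t) (\<lambda>s'. ennreal ((norm (adjoint K (Rr t s' - r t s')))\<^sup>2)) s
             + ennreal (\<zeta> * (norm (adjoint K (r t s)))\<^sup>2)
           \<le> ennreal (omran * (norm (r t s))\<^sup>2)"
begin

abbreviation "hs \<equiv> fconj h"
abbreviation "F t \<equiv> natural_filtration M (\<lambda>i s. (x i s, u i s)) t"
abbreviation "lam \<equiv> lambda_min (K \<circ> adjoint K)"
abbreviation "Ks \<equiv> adjoint K"
abbreviation "nK \<equiv> onorm K"
abbreviation "c1 \<equiv> max ((1 - \<gamma> * \<mu>f)\<^sup>2) ((\<gamma> * Lf - 1)\<^sup>2)"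
abbreviation "c3 \<equiv> 1 - (2 * \<tau> * \<mu>h + \<gamma> * \<tau> * lam) / ((1 + om) * (1 + 2 * \<tau> * \<mu>h))"
abbreviation "c \<equiv> max c1 c3"
abbreviation "PR z \<equiv> prox \<tau> hs z"

lemma lin_Ks: "linear Ks" by (rule adjoint_linear[OF K_lin])
lemma bl_K: "bounded_linear K" using K_lin by (simp add: linear_conv_bounded_linear)
lemma bl_Ks: "bounded_linear Ks" using lin_Ks by (simp add: linear_conv_bounded_linear)
lemma adj: "K a \<bullet> b = a \<bullet> Ks b" by (simp add: adjoint_works[OF K_lin])

lemma normK: "norm (K v) \<le> nK * norm v" by (rule onorm[OF bl_K])
lemma nK0: "nK \<ge> 0" by (rule onorm_pos_le[OF bl_K])

lemma normKs: "norm (Ks v) \<le> nK * norm v"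
proof -
  have "(norm (Ks v))\<^sup>2 = K (Ks v) \<bullet> v" by (simp only: adj power2_norm_eq_inner)
  also have "\<dots> \<le> norm (K (Ks v)) * norm v" by (rule norm_cauchy_schwarz)
  also have "\<dots> \<le> nK * norm (Ks v) * norm v" by (intro mult_right_mono normK) auto
  finally have "norm (Ks v) * norm (Ks v) \<le> norm (Ks v) * (nK * norm v)" by (simp add: power2_eq_square mult_ac)
  then show ?thesis by (cases "norm (Ks v) = 0") (auto simp: nK0)
qed

lemma lam_facts: "lam \<ge> 0" "lam * (norm v)\<^sup>2 \<le> (norm (Ks v))\<^sup>2"
  using eig_facts[OF K_lin] by auto

lemma grad: "(norm (a - \<gamma> *\<^sub>R gf a - (b - \<gamma> *\<^sub>R gf b)))\<^sup>2 \<le> c1 * (norm (a - b))\<^sup>2"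
  using grad_facts(1)[OF f_grad f_smooth f_strong, where \<gamma>=\<gamma> and x=a and y=b] \<gamma> by simp

lemma mu_le_L: "\<mu>f \<le> Lf"
proof -
  obtain b :: 'x where b: "b \<in> Basis" using nonempty_Basis by blast
  have "\<mu>f * (norm (b - 0))\<^sup>2 \<le> (gf b - gf 0) \<bullet> (b - 0)" by (rule grad_facts(2)[OF f_grad f_smooth f_strong order_refl])
  also have "\<dots> \<le> Lf * (norm (b - 0))\<^sup>2" by (rule grad_facts(3)[OF f_grad f_smooth f_strong order_refl])
  finally show ?thesis using b by simp
qed

lemma Lf_pos: "Lf > 0" using mu_le_L \<mu>f_pos by simp

lemma c_lt1: "c < 1"
proof -
  have gL: "\<gamma> * Lf < 2" using \<gamma> Lf_pos by (simp add: field_simps)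
  have gm: "\<gamma> * \<mu>f \<le> \<gamma> * Lf" using mu_le_L \<gamma> by simp
  have gm0: "\<gamma> * \<mu>f > 0" using \<gamma> \<mu>f_pos by simp
  have a: "(1 - \<gamma> * \<mu>f)\<^sup>2 < 1" using gL gm gm0 by (simp add: power2_eq_square) (smt (verit) mult_less_cancel_right2 mult_less_cancel_left2 mult_minus_left mult_minus_right)
  have b: "(\<gamma> * Lf - 1)\<^sup>2 < 1" using gL gm gm0 by (simp add: power2_eq_square) (smt (verit) mult_less_cancel_right2 mult_less_cancel_left2 mult_minus_left mult_minus_right)
  have d: "(1 + om) * (1 + 2 * \<tau> * \<mu>h) > 0" using om \<tau> hs_strong by (simp add: add_pos_nonneg)
  have "2 * \<tau> * \<mu>h + \<gamma> * \<tau> * lam > 0" using lam_or_\<mu>h lam_facts(1) \<tau> \<gamma> hs_strong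
    by (auto simp: add_pos_nonneg add_nonneg_pos)
  then have "c3 < 1" using d by simp
  then show ?thesis using a b by simp
qed

lemma c_nonneg: "c \<ge> 0" by (simp add: le_max_iff_disj)

end


context rp begin

lemma hs_us: "\<exists>U. hs us = ereal U" by (rule subdiff_strong(1)[OF h_proper hs_strong(2) saddle(2)])

lemma us_strong: "hs us + ereal (K xs \<bullet> (v - us) + \<mu>h / 2 * (norm (v - us))\<^sup>2) \<le> hs v"
  by (rule subdiff_strong(2)[OF h_proper hs_strong(2) saddle(2)])

lemma PR_fin: "\<exists>P. hs (PR z) = ereal P"
  using hs_us prox_char(1)[OF h_proper hs_strong(2) _ \<tau>] by blast

lemma PR_strong: "hs (PR z) + ereal (((1 / \<tau>) *\<^sub>R (z - PR z)) \<bullet> (v - PR z) + \<mu>h / 2 * (norm (v - PR z))\<^sup>2) \<le> hs v"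
  using hs_us prox_char(2)[OF h_proper hs_strong(2) _ \<tau>, of us _ z v] by auto

lemma PR_mono: "\<mu>h * (norm (PR z - us))\<^sup>2 \<le> ((1 / \<tau>) *\<^sub>R (z - PR z) - K xs) \<bullet> (PR z - us)"
proof -
  obtain P where P: "hs (PR z) = ereal P" using PR_fin by blast
  obtain U where U: "hs us = ereal U" using hs_us by blast
  show ?thesis by (rule strong_mono[OF P U PR_strong us_strong])
qed

lemma PR_mono2: "\<mu>h * (norm (PR z1 - PR z2))\<^sup>2 \<le> ((1 / \<tau>) *\<^sub>R (z1 - PR z1) - (1 / \<tau>) *\<^sub>R (z2 - PR z2)) \<bullet> (PR z1 - PR z2)"
proof -
  obtain P1 where P1: "hs (PR z1) = ereal P1" using PR_fin by blast
  obtain P2 where P2: "hs (PR z2) = ereal P2" using PR_fin by blast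
  show ?thesis by (rule strong_mono[OF P1 P2 PR_strong PR_strong])
qed

lemma PR_nonexp: "norm (PR z1 - PR z2) \<le> norm (z1 - z2)"
proof -
  define d where "d = PR z1 - PR z2"
  have "0 \<le> \<mu>h * (norm d)\<^sup>2" using hs_strong(1) by simp
  also have "\<dots> \<le> ((1 / \<tau>) *\<^sub>R (z1 - PR z1) - (1 / \<tau>) *\<^sub>R (z2 - PR z2)) \<bullet> d" unfolding d_def by (rule PR_mono2)
  also have "\<dots> = (1 / \<tau>) * ((z1 - z2) \<bullet> d - (norm d)\<^sup>2)"
    unfolding d_def power2_norm_eq_inner by (simp add: algebra_simps inner_diff_left inner_diff_right)
  finally have "(norm d)\<^sup>2 \<le> (z1 - z2) \<bullet> d" using \<tau> by (auto simp: zero_le_divide_iff)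
  also have "\<dots> \<le> norm (z1 - z2) * norm d" by (rule norm_cauchy_schwarz)
  finally have "norm d * norm d \<le> norm (z1 - z2) * norm d" by (simp add: power2_eq_square)
  then show ?thesis unfolding d_def[symmetric] by (cases "norm d = 0") auto
qed

lemma PR_bound: "norm (PR z - us) \<le> norm (z - us - \<tau> *\<^sub>R K xs)"
proof -
  define d where "d = PR z - us"
  have "0 \<le> \<mu>h * (norm d)\<^sup>2" using hs_strong(1) by simp
  also have "\<dots> \<le> ((1 / \<tau>) *\<^sub>R (z - PR z) - K xs) \<bullet> d" unfolding d_def by (rule PR_mono)
  also have "\<dots> = (1 / \<tau>) * ((z - us - \<tau> *\<^sub>R K xs) \<bullet> d - (norm d)\<^sup>2)"
    unfolding d_def power2_norm_eq_inner using \<tau> by (simp add: algebra_simps inner_diff_left inner_diff_right)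
  finally have "(norm d)\<^sup>2 \<le> (z - us - \<tau> *\<^sub>R K xs) \<bullet> d" using \<tau> by (auto simp: zero_le_divide_iff)
  also have "\<dots> \<le> norm (z - us - \<tau> *\<^sub>R K xs) * norm d" by (rule norm_cauchy_schwarz)
  finally have "norm d * norm d \<le> norm (z - us - \<tau> *\<^sub>R K xs) * norm d" by (simp add: power2_eq_square)
  then show ?thesis unfolding d_def[symmetric] by (cases "norm d = 0") auto
qed

lemma cont_PR: "continuous_on UNIV (\<lambda>z. PR z)"
proof -
  have "1-lipschitz_on UNIV (\<lambda>z. PR z)" by (rule lipschitz_onI) (auto simp: dist_norm PR_nonexp)
  then show ?thesis by (rule lipschitz_on_continuous_on)
qed

lemma cont_gf: "continuous_on UNIV gf"
proof -
  have "Lf-lipschitz_on UNIV gf" by (rule lipschitz_onI) (use Lf_pos f_smooth in \<open>auto simp: dist_norm\<close>)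
  then show ?thesis by (rule lipschitz_on_continuous_on)
qed

lemma meas_PR[measurable]: "(\<lambda>z. PR z) \<in> borel_measurable borel"
  by (rule borel_measurable_continuous_onI[OF cont_PR])
lemma meas_gf[measurable]: "gf \<in> borel_measurable borel"
  by (rule borel_measurable_continuous_onI[OF cont_gf])
lemma meas_K[measurable]: "K \<in> borel_measurable borel"
  by (rule borel_measurable_continuous_onI[OF linear_continuous_on[OF bl_K]])
lemma meas_Ks[measurable]: "Ks \<in> borel_measurable borel"
  by (rule borel_measurable_continuous_onI[OF linear_continuous_on[OF bl_Ks]])

definition XH :: "'x \<Rightarrow> 'u \<Rightarrow> 'x" where "XH a b = a - \<gamma> *\<^sub>R gf a - \<gamma> *\<^sub>R Ks b"
definition RF :: "'x \<Rightarrow> 'u \<Rightarrow> 'u" where "RF a b = PR (b + \<tau> *\<^sub>R K (XH a b)) - b"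

lemma xhat_eq: "s \<in> space M \<Longrightarrow> xhat t s = XH (x t s) (u t s)"
  using xhat_def unfolding XH_def by simp
lemma r_eq: "s \<in> space M \<Longrightarrow> r t s = RF (x t s) (u t s)"
  using r_def xhat_eq unfolding RF_def by simp

lemma meas_xu: "x t \<in> borel_measurable M \<and> u t \<in> borel_measurable M"
proof (induction t)
  case 0
  have "x 0 \<in> borel_measurable M \<longleftrightarrow> (\<lambda>s. x0) \<in> borel_measurable M" by (rule measurable_cong) (use init in auto)
  moreover have "u 0 \<in> borel_measurable M \<longleftrightarrow> (\<lambda>s. u0) \<in> borel_measurable M" by (rule measurable_cong) (use init in auto)
  ultimately show ?case by simp
next
  case (Suc t)
  then have [measurable]: "x t \<in> borel_measurable M" "u t \<in> borel_measurable M" by auto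
  note R_meas[measurable]
  have mu: "u (Suc t) \<in> borel_measurable M \<longleftrightarrow> (\<lambda>s. u t s + (1 / (1 + om)) *\<^sub>R Rr t s) \<in> borel_measurable M"
    by (rule measurable_cong) (use u_step in auto)
  have mx: "x (Suc t) \<in> borel_measurable M \<longleftrightarrow> (\<lambda>s. XH (x t s) (u t s) - (\<gamma> * (1 + om)) *\<^sub>R (Ks (u t s + (1 / (1 + om)) *\<^sub>R Rr t s) - Ks (u t s))) \<in> borel_measurable M"
    by (rule measurable_cong) (use x_step u_step xhat_eq in auto)
  show ?case unfolding mu mx XH_def by measurable
qed

lemma meas_x[measurable]: "x t \<in> borel_measurable M" and meas_u[measurable]: "u t \<in> borel_measurable M"
  using meas_xu by auto

lemma meas_xhat[measurable]: "xhat t \<in> borel_measurable M"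
proof -
  have "xhat t \<in> borel_measurable M \<longleftrightarrow> (\<lambda>s. XH (x t s) (u t s)) \<in> borel_measurable M"
    by (rule measurable_cong) (use xhat_eq in auto)
  moreover have "(\<lambda>s. XH (x t s) (u t s)) \<in> borel_measurable M"
    unfolding XH_def by measurable
  ultimately show ?thesis by simp
qed

lemma meas_r[measurable]: "r t \<in> borel_measurable M"
proof -
  have "r t \<in> borel_measurable M \<longleftrightarrow> (\<lambda>s. RF (x t s) (u t s)) \<in> borel_measurable M"
    by (rule measurable_cong) (use r_eq in auto)
  moreover have "(\<lambda>s. RF (x t s) (u t s)) \<in> borel_measurable M"
    unfolding RF_def XH_def by measurable
  ultimately show ?thesis by simp
qed

end


context rp begin

lemma meas_X[measurable]: "(\<lambda>s. (x i s, u i s)) \<in> borel_measurable M" by measurable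

lemma gens_Pow: "{(\<lambda>s. (x i s, u i s)) -` A \<inter> space M | i A. i \<le> t \<and> A \<in> sets borel} \<subseteq> Pow (space M)"
  by auto

lemma F_sets_eq: "sets (F t) = sigma_sets (space M) {(\<lambda>s. (x i s, u i s)) -` A \<inter> space M | i A. i \<le> t \<and> A \<in> sets borel}"
  unfolding natural_filtration_def by (rule sets_measure_of[OF gens_Pow])

lemma F_space: "space (F t) = space M"
  unfolding natural_filtration_def by (rule space_measure_of_conv)

lemma F_sets: "sets (F t) \<subseteq> sets M"
  unfolding F_sets_eq
proof (rule sets.sigma_sets_subset)
  show "{(\<lambda>s. (x i s, u i s)) -` A \<inter> space M | i A. i \<le> t \<and> A \<in> sets borel} \<subseteq> sets M"
    using measurable_sets[OF meas_X] by blast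
qed

lemma F_subalg: "subalgebra M (F t)"
  unfolding subalgebra_def using F_sets F_space by simp

lemma F_sfs: "sigma_finite_subalgebra M (F t)"
proof -
  interpret prob_space M by (rule M)
  have "finite_measure_subalgebra M (F t)"
    by unfold_locales (rule F_subalg)
  then show ?thesis by (rule finite_measure_subalgebra_is_sigma_finite)
qed

lemma meas_XF: "(\<lambda>s. (x t s, u t s)) \<in> borel_measurable (F t)"
proof (rule measurableI)
  fix A :: "('x \<times> 'u) set" assume "A \<in> sets borel"
  then have "(\<lambda>s. (x t s, u t s)) -` A \<inter> space M \<in> {(\<lambda>s. (x i s, u i s)) -` A \<inter> space M | i A. i \<le> t \<and> A \<in> sets borel}"
    by blast
  then have "(\<lambda>s. (x t s, u t s)) -` A \<inter> space M \<in> sets (F t)" unfolding F_sets_eq by (rule sigma_sets.Basic)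
  then show "(\<lambda>s. (x t s, u t s)) -` A \<inter> space (F t) \<in> sets (F t)" unfolding F_space .
qed simp

lemma meas_xF[measurable]: "x t \<in> borel_measurable (F t)"
proof -
  have "(\<lambda>s. fst (x t s, u t s)) \<in> borel_measurable (F t)"
    using measurable_comp[OF meas_XF borel_measurable_continuous_onI[OF continuous_on_fst[OF continuous_on_id]]]
    by (simp add: o_def)
  then show ?thesis by simp
qed

lemma meas_uF[measurable]: "u t \<in> borel_measurable (F t)"
proof -
  have "(\<lambda>s. snd (x t s, u t s)) \<in> borel_measurable (F t)"
    using measurable_comp[OF meas_XF borel_measurable_continuous_onI[OF continuous_on_snd[OF continuous_on_id]]]
    by (simp add: o_def)
  then show ?thesis by simp
qed

lemma r_F_cong: "q1 \<in> borel_measurable (F t) \<longleftrightarrow> q2 \<in> borel_measurable (F t)" if "\<And>s. s \<in> space M \<Longrightarrow> q1 s = q2 s"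
  by (rule measurable_cong) (use that F_space in auto)

end


definition sqi :: "'s measure \<Rightarrow> ('s \<Rightarrow> 'a::euclidean_space) \<Rightarrow> bool" where
  "sqi M V \<longleftrightarrow> V \<in> borel_measurable M \<and> integrable M (\<lambda>s. (norm (V s))\<^sup>2)"

lemma sqiD: "sqi M V \<Longrightarrow> V \<in> borel_measurable M" "sqi M V \<Longrightarrow> integrable M (\<lambda>s. (norm (V s))\<^sup>2)"
  unfolding sqi_def by auto

lemma sq_sum_le: fixes a b :: real shows "(a + b)\<^sup>2 \<le> 2 * a\<^sup>2 + 2 * b\<^sup>2"
  using zero_le_power2[of "a - b"] power2_sum[of a b] power2_diff[of a b] by linarith

lemma prod_le_sq: fixes a b :: real shows "a * b \<le> a\<^sup>2 + b\<^sup>2"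
  using zero_le_power2[of "a - b"] power2_diff[of a b] zero_le_power2[of a] zero_le_power2[of b] by linarith

lemma sqi_bound:
  assumes W: "sqi M W" and V: "V \<in> borel_measurable M" and b: "\<And>s. s \<in> space M \<Longrightarrow> norm (V s) \<le> norm (W s)"
  shows "sqi M V"
  unfolding sqi_def
proof (intro conjI V Bochner_Integration.integrable_bound[OF sqiD(2)[OF W]])
  show "(\<lambda>s. (norm (V s))\<^sup>2) \<in> borel_measurable M" using V by measurable
  show "AE s in M. norm ((norm (V s))\<^sup>2) \<le> norm ((norm (W s))\<^sup>2)"
    using b by (intro AE_I2) (simp add: power_mono)
qed

lemma sqi_add:
  assumes V: "sqi M V" and W: "sqi M W"
  shows "sqi M (\<lambda>s. V s + W s)"
  unfolding sqi_def
proof (intro conjI)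
  have [measurable]: "V \<in> borel_measurable M" "W \<in> borel_measurable M" using V W by (auto dest: sqiD)
  show m: "(\<lambda>s. V s + W s) \<in> borel_measurable M" by measurable
  have i: "integrable M (\<lambda>s. 2 * (norm (V s))\<^sup>2 + 2 * (norm (W s))\<^sup>2)"
    using sqiD(2)[OF V] sqiD(2)[OF W] by auto
  show "integrable M (\<lambda>s. (norm (V s + W s))\<^sup>2)"
  proof (rule Bochner_Integration.integrable_bound[OF i])
    show "(\<lambda>s. (norm (V s + W s))\<^sup>2) \<in> borel_measurable M" by measurable
    show "AE s in M. norm ((norm (V s + W s))\<^sup>2) \<le> norm (2 * (norm (V s))\<^sup>2 + 2 * (norm (W s))\<^sup>2)"
    proof (intro AE_I2)
      fix s
      have "norm (V s + W s) \<le> norm (V s) + norm (W s)" by (rule norm_triangle_ineq)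
      then have "(norm (V s + W s))\<^sup>2 \<le> (norm (V s) + norm (W s))\<^sup>2" by (intro power_mono) auto
      also have "\<dots> \<le> 2 * (norm (V s))\<^sup>2 + 2 * (norm (W s))\<^sup>2"
        by (rule sq_sum_le)
      finally show "norm ((norm (V s + W s))\<^sup>2) \<le> norm (2 * (norm (V s))\<^sup>2 + 2 * (norm (W s))\<^sup>2)" by simp
    qed
  qed
qed

lemma sqi_lin:
  assumes V: "sqi M V" and T: "bounded_linear T"
  shows "sqi M (\<lambda>s. T (V s))"
  unfolding sqi_def
proof (intro conjI)
  have [measurable]: "V \<in> borel_measurable M" using V by (auto dest: sqiD)
  have [measurable]: "T \<in> borel_measurable borel" by (rule borel_measurable_continuous_onI[OF linear_continuous_on[OF T]])
  show "(\<lambda>s. T (V s)) \<in> borel_measurable M" by measurable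
  have i: "integrable M (\<lambda>s. (onorm T)\<^sup>2 * (norm (V s))\<^sup>2)" using sqiD(2)[OF V] by auto
  show "integrable M (\<lambda>s. (norm (T (V s)))\<^sup>2)"
  proof (rule Bochner_Integration.integrable_bound[OF i])
    show "(\<lambda>s. (norm (T (V s)))\<^sup>2) \<in> borel_measurable M" by measurable
    show "AE s in M. norm ((norm (T (V s)))\<^sup>2) \<le> norm ((onorm T)\<^sup>2 * (norm (V s))\<^sup>2)"
    proof (intro AE_I2)
      fix s
      have "(norm (T (V s)))\<^sup>2 \<le> (onorm T * norm (V s))\<^sup>2" by (intro power_mono onorm[OF T]) auto
      then show "norm ((norm (T (V s)))\<^sup>2) \<le> norm ((onorm T)\<^sup>2 * (norm (V s))\<^sup>2)" by (simp add: power_mult_distrib)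
    qed
  qed
qed

lemma sqi_scale: "sqi M V \<Longrightarrow> sqi M (\<lambda>s. a *\<^sub>R V s)"
  using sqi_lin[of M V "\<lambda>v. a *\<^sub>R v"] bounded_linear_scaleR_right by auto

lemma sqi_minus: "sqi M V \<Longrightarrow> sqi M (\<lambda>s. - V s)"
  using sqi_scale[of M V "-1"] by simp

lemma sqi_diff: "sqi M V \<Longrightarrow> sqi M W \<Longrightarrow> sqi M (\<lambda>s. V s - W s)"
  using sqi_add[of M V "\<lambda>s. - W s"] sqi_minus[of M W] by simp

lemma sqi_const: "finite_measure M \<Longrightarrow> sqi M (\<lambda>s. a)"
  unfolding sqi_def by (simp add: finite_measure.integrable_const)

lemma sqi_cong:
  assumes "\<And>s. s \<in> space M \<Longrightarrow> V s = W s"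
  shows "sqi M V \<longleftrightarrow> sqi M W"
proof -
  have "V \<in> borel_measurable M \<longleftrightarrow> W \<in> borel_measurable M" by (rule measurable_cong) (use assms in auto)
  moreover have "integrable M (\<lambda>s. (norm (V s))\<^sup>2) \<longleftrightarrow> integrable M (\<lambda>s. (norm (W s))\<^sup>2)"
    by (rule Bochner_Integration.integrable_cong[OF refl]) (use assms in auto)
  ultimately show ?thesis unfolding sqi_def by simp
qed

lemma sqi_inner:
  assumes V: "sqi M V" and W: "sqi M W"
  shows "integrable M (\<lambda>s. V s \<bullet> W s)"
proof -
  have [measurable]: "V \<in> borel_measurable M" "W \<in> borel_measurable M" using V W by (auto dest: sqiD)
  have i: "integrable M (\<lambda>s. (norm (V s))\<^sup>2 + (norm (W s))\<^sup>2)"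
    using sqiD(2)[OF V] sqiD(2)[OF W] by auto
  show ?thesis
  proof (rule Bochner_Integration.integrable_bound[OF i])
    show "(\<lambda>s. V s \<bullet> W s) \<in> borel_measurable M" by measurable
    show "AE s in M. norm (V s \<bullet> W s) \<le> norm ((norm (V s))\<^sup>2 + (norm (W s))\<^sup>2)"
    proof (intro AE_I2)
      fix s
      have "\<bar>V s \<bullet> W s\<bar> \<le> norm (V s) * norm (W s)" by (rule Cauchy_Schwarz_ineq2)
      also have "\<dots> \<le> (norm (V s))\<^sup>2 + (norm (W s))\<^sup>2"
        by (rule prod_le_sq)
      finally show "norm (V s \<bullet> W s) \<le> norm ((norm (V s))\<^sup>2 + (norm (W s))\<^sup>2)" by simp
    qed
  qed
qed


context rp begin

definition Psi where "Psi t s = (1 / \<gamma>) * (norm (x t s - xs))\<^sup>2 + (1 + om) * (1 / \<tau> + 2 * \<mu>h) * (norm (u t s - us))\<^sup>2"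

lemma Psi_nonneg: "Psi t s \<ge> 0"
  unfolding Psi_def using \<gamma> \<tau> om hs_strong(1) by (intro add_nonneg_nonneg mult_nonneg_nonneg) auto

lemma meas_Psi[measurable]: "Psi t \<in> borel_measurable M"
  unfolding Psi_def[abs_def] by measurable

lemma xs_fix: "xs = xs - \<gamma> *\<^sub>R gf xs - \<gamma> *\<^sub>R Ks us"
proof -
  have "\<gamma> *\<^sub>R gf xs + \<gamma> *\<^sub>R Ks us = \<gamma> *\<^sub>R (gf xs + Ks us)" by (simp add: scaleR_right_distrib)
  also have "\<dots> = 0" using saddle(1) by simp
  finally show ?thesis by (simp add: algebra_simps)
qed

lemma sqi_basic:
  assumes int: "integrable M (Psi t)"
  shows "sqi M (\<lambda>s. x t s - xs)" "sqi M (\<lambda>s. u t s - us)"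
proof -
  have Cw: "(1 + om) * (1 / \<tau> + 2 * \<mu>h) > 0" using om \<tau> hs_strong(1) by (simp add: add_pos_nonneg)
  show "sqi M (\<lambda>s. x t s - xs)" unfolding sqi_def
  proof (intro conjI)
    show "(\<lambda>s. x t s - xs) \<in> borel_measurable M" by measurable
    show "integrable M (\<lambda>s. (norm (x t s - xs))\<^sup>2)"
    proof (rule Bochner_Integration.integrable_bound)
      show "integrable M (\<lambda>s. \<gamma> * Psi t s)" using int by auto
      show "(\<lambda>s. (norm (x t s - xs))\<^sup>2) \<in> borel_measurable M" by measurable
      show "AE s in M. norm ((norm (x t s - xs))\<^sup>2) \<le> norm (\<gamma> * Psi t s)"
      proof (intro AE_I2)
        fix s
        have B: "0 \<le> \<gamma> * ((1 + om) * (1 / \<tau> + 2 * \<mu>h) * (norm (u t s - us))\<^sup>2)" using Cw \<gamma> by simp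
        have "\<gamma> * Psi t s = (norm (x t s - xs))\<^sup>2 + \<gamma> * ((1 + om) * (1 / \<tau> + 2 * \<mu>h) * (norm (u t s - us))\<^sup>2)"
          unfolding Psi_def using \<gamma> by (simp add: distrib_left)
        then have "(norm (x t s - xs))\<^sup>2 \<le> \<gamma> * Psi t s" using B by linarith
        then show "norm ((norm (x t s - xs))\<^sup>2) \<le> norm (\<gamma> * Psi t s)" using \<gamma> Psi_nonneg[of t s] by simp
      qed
    qed
  qed
  show "sqi M (\<lambda>s. u t s - us)" unfolding sqi_def
  proof (intro conjI)
    show "(\<lambda>s. u t s - us) \<in> borel_measurable M" by measurable
    show "integrable M (\<lambda>s. (norm (u t s - us))\<^sup>2)"
    proof (rule Bochner_Integration.integrable_bound)
      show "integrable M (\<lambda>s. Psi t s / ((1 + om) * (1 / \<tau> + 2 * \<mu>h)))" using int by auto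
      show "(\<lambda>s. (norm (u t s - us))\<^sup>2) \<in> borel_measurable M" by measurable
      show "AE s in M. norm ((norm (u t s - us))\<^sup>2) \<le> norm (Psi t s / ((1 + om) * (1 / \<tau> + 2 * \<mu>h)))"
      proof (intro AE_I2)
        fix s
        have "(1 / \<gamma>) * (norm (x t s - xs))\<^sup>2 \<ge> 0" using \<gamma> by simp
        then have "(1 + om) * (1 / \<tau> + 2 * \<mu>h) * (norm (u t s - us))\<^sup>2 \<le> Psi t s" unfolding Psi_def by simp
        then have "(norm (u t s - us))\<^sup>2 \<le> Psi t s / ((1 + om) * (1 / \<tau> + 2 * \<mu>h))" using Cw by (simp add: field_simps)
        then show "norm ((norm (u t s - us))\<^sup>2) \<le> norm (Psi t s / ((1 + om) * (1 / \<tau> + 2 * \<mu>h)))"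
          using Cw Psi_nonneg[of t s] by simp
      qed
    qed
  qed
qed

lemma sqi_derived:
  assumes int: "integrable M (Psi t)"
  shows "sqi M (\<lambda>s. XH (x t s) (u t s) - xs)"
    and "sqi M (\<lambda>s. RF (x t s) (u t s))"
    and "sqi M (r t)"
proof -
  interpret prob_space M by (rule M)
  note d = sqi_basic[OF int]
  have g: "sqi M (\<lambda>s. gf (x t s) - gf xs)"
  proof (rule sqi_bound[OF sqi_scale[OF d(1), of Lf]])
    show "(\<lambda>s. gf (x t s) - gf xs) \<in> borel_measurable M" by measurable
    show "norm (gf (x t s) - gf xs) \<le> norm (Lf *\<^sub>R (x t s - xs))" for s using f_smooth Lf_pos by simp
  qed
  have eqx: "XH (x t s) (u t s) - xs = (x t s - xs) - \<gamma> *\<^sub>R (gf (x t s) - gf xs) - \<gamma> *\<^sub>R Ks (u t s - us)" for s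
  proof -
    have "XH (x t s) (u t s) - xs = XH (x t s) (u t s) - (xs - \<gamma> *\<^sub>R gf xs - \<gamma> *\<^sub>R Ks us)"
      using xs_fix by simp
    also have "\<dots> = (x t s - xs) - \<gamma> *\<^sub>R (gf (x t s) - gf xs) - \<gamma> *\<^sub>R (Ks (u t s) - Ks us)"
      unfolding XH_def by (simp add: algebra_simps)
    finally show ?thesis by (simp add: linear_diff[OF lin_Ks])
  qed
  have sx: "sqi M (\<lambda>s. XH (x t s) (u t s) - xs)"
    unfolding eqx by (intro sqi_diff sqi_scale sqi_lin[OF _ bl_Ks] d g)
  then show "sqi M (\<lambda>s. XH (x t s) (u t s) - xs)" .
  have sp: "sqi M (\<lambda>s. PR (u t s + \<tau> *\<^sub>R K (XH (x t s) (u t s))) - us)"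
  proof (rule sqi_bound)
    show "sqi M (\<lambda>s. (u t s - us) + \<tau> *\<^sub>R K (XH (x t s) (u t s) - xs))"
      by (intro sqi_add sqi_scale sqi_lin[OF _ bl_K] d sx)
    show "(\<lambda>s. PR (u t s + \<tau> *\<^sub>R K (XH (x t s) (u t s))) - us) \<in> borel_measurable M"
      unfolding XH_def by measurable
    fix s
    have "norm (PR (u t s + \<tau> *\<^sub>R K (XH (x t s) (u t s))) - us) \<le> norm ((u t s + \<tau> *\<^sub>R K (XH (x t s) (u t s))) - us - \<tau> *\<^sub>R K xs)"
      by (rule PR_bound)
    also have "(u t s + \<tau> *\<^sub>R K (XH (x t s) (u t s))) - us - \<tau> *\<^sub>R K xs = (u t s - us) + \<tau> *\<^sub>R K (XH (x t s) (u t s) - xs)"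
      by (simp add: linear_diff[OF K_lin] algebra_simps)
    finally show "norm (PR (u t s + \<tau> *\<^sub>R K (XH (x t s) (u t s))) - us) \<le> norm ((u t s - us) + \<tau> *\<^sub>R K (XH (x t s) (u t s) - xs))" .
  qed
  have "sqi M (\<lambda>s. (PR (u t s + \<tau> *\<^sub>R K (XH (x t s) (u t s))) - us) - (u t s - us))"
    by (intro sqi_diff sp d)
  then show sr: "sqi M (\<lambda>s. RF (x t s) (u t s))" unfolding RF_def by simp
  show "sqi M (r t)" using sr by (subst sqi_cong[of M "r t"]) (auto simp: r_eq)
qed

end


context rp begin

lemma sqi_D:
  assumes int: "integrable M (Psi t)"
  shows "sqi M (\<lambda>s. Rr t s - r t s)"
    and "(\<integral>s. (norm (Rr t s - r t s))\<^sup>2 \<partial>M) \<le> (\<integral>s. om * (norm (r t s))\<^sup>2 \<partial>M)"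
    and "(\<integral>s. (norm (Ks (Rr t s - r t s)))\<^sup>2 \<partial>M) + (\<integral>s. \<zeta> * (norm (Ks (r t s)))\<^sup>2 \<partial>M)
          \<le> (\<integral>s. omran * (norm (r t s))\<^sup>2 \<partial>M)"
proof -
  interpret prob_space M by (rule M)
  interpret sigma_finite_subalgebra M "F t" by (rule F_sfs)
  note R_meas[measurable]
  have sr: "sqi M (r t)" by (rule sqi_derived(3)[OF int])
  have ir: "integrable M (\<lambda>s. (norm (r t s))\<^sup>2)" by (rule sqiD(2)[OF sr])
  have nn1: "(\<integral>\<^sup>+ s. nn_cond_exp M (F t) g s \<partial>M) = (\<integral>\<^sup>+ s. g s \<partial>M)" if [measurable]: "g \<in> borel_measurable M" for g
    using nn_cond_exp_intg[of "\<lambda>_. 1" g] by simp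
  have "(\<integral>\<^sup>+ s. ennreal ((norm (Rr t s - r t s))\<^sup>2) \<partial>M) = (\<integral>\<^sup>+ s. nn_cond_exp M (F t) (\<lambda>s'. ennreal ((norm (Rr t s' - r t s'))\<^sup>2)) s \<partial>M)"
    by (rule nn1[symmetric]) measurable
  also have "\<dots> \<le> (\<integral>\<^sup>+ s. ennreal (om * (norm (r t s))\<^sup>2) \<partial>M)"
    by (rule nn_integral_mono_AE[OF R_var])
  also have "\<dots> = ennreal (\<integral>s. om * (norm (r t s))\<^sup>2 \<partial>M)"
    by (rule nn_integral_eq_integral) (use ir om in auto)
  finally have A: "(\<integral>\<^sup>+ s. ennreal ((norm (Rr t s - r t s))\<^sup>2) \<partial>M) \<le> ennreal (\<integral>s. om * (norm (r t s))\<^sup>2 \<partial>M)" .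
  have iD: "integrable M (\<lambda>s. (norm (Rr t s - r t s))\<^sup>2)"
    by (rule integrableI_nonneg) (use A in \<open>auto simp: top.not_eq_extremum intro: le_less_trans\<close>)
  then show sD: "sqi M (\<lambda>s. Rr t s - r t s)" unfolding sqi_def by simp
  have "ennreal (\<integral>s. (norm (Rr t s - r t s))\<^sup>2 \<partial>M) = (\<integral>\<^sup>+ s. ennreal ((norm (Rr t s - r t s))\<^sup>2) \<partial>M)"
    by (rule nn_integral_eq_integral[symmetric]) (use iD in auto)
  with A have "ennreal (\<integral>s. (norm (Rr t s - r t s))\<^sup>2 \<partial>M) \<le> ennreal (\<integral>s. om * (norm (r t s))\<^sup>2 \<partial>M)" by simp
  moreover have "(\<integral>s. om * (norm (r t s))\<^sup>2 \<partial>M) \<ge> 0" using om by simp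
  ultimately show "(\<integral>s. (norm (Rr t s - r t s))\<^sup>2 \<partial>M) \<le> (\<integral>s. om * (norm (r t s))\<^sup>2 \<partial>M)"
    by (simp add: ennreal_le_iff)
  have sKD: "sqi M (\<lambda>s. Ks (Rr t s - r t s))" by (rule sqi_lin[OF sD bl_Ks])
  have iKD: "integrable M (\<lambda>s. (norm (Ks (Rr t s - r t s)))\<^sup>2)" by (rule sqiD(2)[OF sKD])
  have iKr: "integrable M (\<lambda>s. \<zeta> * (norm (Ks (r t s)))\<^sup>2)" using sqiD(2)[OF sqi_lin[OF sr bl_Ks]] by simp
  have "ennreal (\<integral>s. (norm (Ks (Rr t s - r t s)))\<^sup>2 \<partial>M) + ennreal (\<integral>s. \<zeta> * (norm (Ks (r t s)))\<^sup>2 \<partial>M)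
      = (\<integral>\<^sup>+ s. ennreal ((norm (Ks (Rr t s - r t s)))\<^sup>2) \<partial>M) + (\<integral>\<^sup>+ s. ennreal (\<zeta> * (norm (Ks (r t s)))\<^sup>2) \<partial>M)"
    using nn_integral_eq_integral[OF iKD] nn_integral_eq_integral[OF iKr] \<zeta> by simp
  also have "\<dots> = (\<integral>\<^sup>+ s. nn_cond_exp M (F t) (\<lambda>s'. ennreal ((norm (Ks (Rr t s' - r t s')))\<^sup>2)) s \<partial>M)
       + (\<integral>\<^sup>+ s. ennreal (\<zeta> * (norm (Ks (r t s)))\<^sup>2) \<partial>M)"
    by (subst nn1) measurable
  also have "\<dots> = (\<integral>\<^sup>+ s. nn_cond_exp M (F t) (\<lambda>s'. ennreal ((norm (Ks (Rr t s' - r t s')))\<^sup>2)) s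
       + ennreal (\<zeta> * (norm (Ks (r t s)))\<^sup>2) \<partial>M)"
    by (rule nn_integral_add[symmetric]) measurable
  also have "\<dots> \<le> (\<integral>\<^sup>+ s. ennreal (omran * (norm (r t s))\<^sup>2) \<partial>M)"
    by (rule nn_integral_mono_AE[OF R_var_K])
  also have "\<dots> = ennreal (\<integral>s. omran * (norm (r t s))\<^sup>2 \<partial>M)"
    by (rule nn_integral_eq_integral) (use ir omran in auto)
  finally have "ennreal ((\<integral>s. (norm (Ks (Rr t s - r t s)))\<^sup>2 \<partial>M) + (\<integral>s. \<zeta> * (norm (Ks (r t s)))\<^sup>2 \<partial>M))
      \<le> ennreal (\<integral>s. omran * (norm (r t s))\<^sup>2 \<partial>M)"
    using \<zeta> by (simp add: ennreal_plus)
  moreover have "(\<integral>s. omran * (norm (r t s))\<^sup>2 \<partial>M) \<ge> 0" using omran by simp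
  ultimately show "(\<integral>s. (norm (Ks (Rr t s - r t s)))\<^sup>2 \<partial>M) + (\<integral>s. \<zeta> * (norm (Ks (r t s)))\<^sup>2 \<partial>M)
          \<le> (\<integral>s. omran * (norm (r t s))\<^sup>2 \<partial>M)"
    by (simp add: ennreal_le_iff)
qed

end


context rp begin

lemma cross0:
  assumes int: "integrable M (Psi t)" and sG: "sqi M G" and GF[measurable]: "G \<in> borel_measurable (F t)"
  shows "integrable M (\<lambda>s. G s \<bullet> (Rr t s - r t s))" "(\<integral>s. G s \<bullet> (Rr t s - r t s) \<partial>M) = 0"
proof -
  interpret prob_space M by (rule M)
  interpret sigma_finite_subalgebra M "F t" by (rule F_sfs)
  note R_meas[measurable]
  have sr: "sqi M (r t)" by (rule sqi_derived(3)[OF int])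
  have sD: "sqi M (\<lambda>s. Rr t s - r t s)" by (rule sqi_D(1)[OF int])
  have sR: "sqi M (Rr t)" using sqi_add[OF sr sD] by simp
  show "integrable M (\<lambda>s. G s \<bullet> (Rr t s - r t s))" by (rule sqi_inner[OF sG sD])
  have each: "integrable M (\<lambda>s. (G s \<bullet> b) * ((Rr t s - r t s) \<bullet> b)) \<and> (\<integral>s. (G s \<bullet> b) * ((Rr t s - r t s) \<bullet> b) \<partial>M) = 0"
    if b: "b \<in> Basis" for b
  proof -
    have bl: "bounded_linear (\<lambda>v::'u. (v \<bullet> b) *\<^sub>R b)"
      by (rule bounded_linear_compose[OF bounded_linear_scaleR_left bounded_linear_inner_left])
    have sV: "sqi M (\<lambda>s. (G s \<bullet> b) *\<^sub>R b)" by (rule sqi_lin[OF sG bl])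
    have e: "((G s \<bullet> b) *\<^sub>R b) \<bullet> y = (G s \<bullet> b) * (y \<bullet> b)" for s y by (simp add: inner_commute)
    have i1: "integrable M (\<lambda>s. (G s \<bullet> b) * (Rr t s \<bullet> b))" using sqi_inner[OF sV sR] unfolding e .
    have i2: "integrable M (\<lambda>s. (G s \<bullet> b) * (r t s \<bullet> b))" using sqi_inner[OF sV sr] unfolding e .
    have fF: "(\<lambda>s. G s \<bullet> b) \<in> borel_measurable (F t)" by measurable
    have "(\<integral>s. (G s \<bullet> b) * (Rr t s \<bullet> b) \<partial>M) = (\<integral>s. (G s \<bullet> b) * real_cond_exp M (F t) (\<lambda>s'. Rr t s' \<bullet> b) s \<partial>M)"
      by (rule real_cond_exp_intg(2)[OF i1 fF, symmetric]) measurable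
    also have "\<dots> = (\<integral>s. (G s \<bullet> b) * (r t s \<bullet> b) \<partial>M)"
    proof (rule integral_cong_AE)
      have [measurable]: "G \<in> borel_measurable M" using sG by (rule sqiD)
      show "(\<lambda>s. (G s \<bullet> b) * real_cond_exp M (F t) (\<lambda>s'. Rr t s' \<bullet> b) s) \<in> borel_measurable M" by measurable
      show "(\<lambda>s. (G s \<bullet> b) * (r t s \<bullet> b)) \<in> borel_measurable M" by measurable
      show "AE s in M. (G s \<bullet> b) * real_cond_exp M (F t) (\<lambda>s'. Rr t s' \<bullet> b) s = (G s \<bullet> b) * (r t s \<bullet> b)"
        using R_unbiased[OF b, of t] by eventually_elim simp
    qed
    finally have eq: "(\<integral>s. (G s \<bullet> b) * (Rr t s \<bullet> b) \<partial>M) = (\<integral>s. (G s \<bullet> b) * (r t s \<bullet> b) \<partial>M)" .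
    have "(\<lambda>s. (G s \<bullet> b) * ((Rr t s - r t s) \<bullet> b)) = (\<lambda>s. (G s \<bullet> b) * (Rr t s \<bullet> b) - (G s \<bullet> b) * (r t s \<bullet> b))"
      by (simp add: inner_diff_left algebra_simps)
    then show ?thesis using i1 i2 eq by simp
  qed
  have "(\<lambda>s. G s \<bullet> (Rr t s - r t s)) = (\<lambda>s. \<Sum>b\<in>Basis. (G s \<bullet> b) * ((Rr t s - r t s) \<bullet> b))"
    by (rule ext, rule euclidean_inner)
  then have "(\<integral>s. G s \<bullet> (Rr t s - r t s) \<partial>M) = (\<integral>s. (\<Sum>b\<in>Basis. (G s \<bullet> b) * ((Rr t s - r t s) \<bullet> b)) \<partial>M)"
    by (rule arg_cong)
  also have "\<dots> = (\<Sum>b\<in>Basis. (\<integral>s. (G s \<bullet> b) * ((Rr t s - r t s) \<bullet> b) \<partial>M))"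
    by (rule Bochner_Integration.integral_sum[where f="\<lambda>b s. (G s \<bullet> b) * ((Rr t s - r t s) \<bullet> b)"]) (use each in blast)
  also have "\<dots> = 0" using each by simp
  finally show "(\<integral>s. G s \<bullet> (Rr t s - r t s) \<partial>M) = 0" .
qed

end


context rp begin

lemma step:
  assumes int: "integrable M (Psi t)"
  shows "integrable M (Psi (Suc t)) \<and> (\<integral>s. Psi (Suc t) s \<partial>M) \<le> c * (\<integral>s. Psi t s \<partial>M)"
proof -
  interpret prob_space M by (rule M)
  note R_meas[measurable]
  define k where "k = 1 / (1 + om)"
  define C where "C = 1 / \<tau> + 2 * \<mu>h"
  define Cw where "Cw = (1 + om) * C"
  define XHs where "XHs s = XH (x t s) (u t s)" for s
  define Rs where "Rs s = RF (x t s) (u t s)" for s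
  define a where "a s = XHs s - xs - \<gamma> *\<^sub>R Ks (Rs s)" for s
  define b where "b s = (u t s - us) + k *\<^sub>R Rs s" for s
  define G where "G s = (2 * Cw * k) *\<^sub>R b s - 2 *\<^sub>R K (a s)" for s
  define D where "D s = Rr t s - r t s" for s
  define Q where "Q s = (1 / \<gamma>) * (norm (a s))\<^sup>2 + Cw * (norm (b s))\<^sup>2" for s
  have k1: "k * (1 + om) = 1" unfolding k_def using om by simp
  have k0: "k > 0" unfolding k_def using om by simp
  have C0: "C > 0" unfolding C_def using \<tau> hs_strong(1) by (simp add: add_pos_nonneg)
  have Cw0: "Cw > 0" unfolding Cw_def using C0 om by simp
  have rRs: "r t s = Rs s" if "s \<in> space M" for s using r_eq[OF that] unfolding Rs_def .
  have xhXHs: "xhat t s = XHs s" if "s \<in> space M" for s using xhat_eq[OF that] unfolding XHs_def .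
  have GF: "G \<in> borel_measurable (F t)"
    unfolding G_def b_def a_def XHs_def Rs_def RF_def XH_def by measurable
  have sx: "sqi M (\<lambda>s. XHs s - xs)" unfolding XHs_def by (rule sqi_derived(1)[OF int])
  have sRs: "sqi M Rs" unfolding Rs_def by (rule sqi_derived(2)[OF int])
  have su: "sqi M (\<lambda>s. u t s - us)" by (rule sqi_basic(2)[OF int])
  have sa: "sqi M a" unfolding a_def by (intro sqi_diff sqi_scale sqi_lin[OF _ bl_Ks] sx sRs)
  have sb: "sqi M b" unfolding b_def by (intro sqi_add sqi_scale su sRs)
  have sG: "sqi M G" unfolding G_def by (intro sqi_diff sqi_scale sqi_lin[OF _ bl_K] sa sb)
  have sD: "sqi M D" unfolding D_def by (rule sqi_D(1)[OF int])
  have sr: "sqi M (r t)" by (rule sqi_derived(3)[OF int])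
  have iQ: "integrable M Q" unfolding Q_def using sqiD(2)[OF sa] sqiD(2)[OF sb] by auto
  have iGD: "integrable M (\<lambda>s. G s \<bullet> D s)" unfolding D_def by (rule cross0(1)[OF int sG GF])
  have IGD: "(\<integral>s. G s \<bullet> D s \<partial>M) = 0" unfolding D_def by (rule cross0(2)[OF int sG GF])
  have iKD: "integrable M (\<lambda>s. (norm (Ks (D s)))\<^sup>2)" by (rule sqiD(2)[OF sqi_lin[OF sD bl_Ks]])
  have iD: "integrable M (\<lambda>s. (norm (D s))\<^sup>2)" by (rule sqiD(2)[OF sD])
  have ir: "integrable M (\<lambda>s. (norm (r t s))\<^sup>2)" by (rule sqiD(2)[OF sr])
  have iKr: "integrable M (\<lambda>s. (norm (Ks (r t s)))\<^sup>2)" by (rule sqiD(2)[OF sqi_lin[OF sr bl_Ks]])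
  have eq: "Psi (Suc t) s = Q s + G s \<bullet> D s + \<gamma> * (norm (Ks (D s)))\<^sup>2 + Cw * k\<^sup>2 * (norm (D s))\<^sup>2"
    if s: "s \<in> space M" for s
  proof -
    have R: "Rr t s = Rs s + D s" unfolding D_def using rRs[OF s] by simp
    have us: "u (Suc t) s = u t s + k *\<^sub>R Rr t s" using u_step[OF s] unfolding k_def .
    have "Ks (u (Suc t) s) - Ks (u t s) = k *\<^sub>R Ks (Rr t s)"
      unfolding us by (simp add: linear_add[OF lin_Ks] linear_cmul[OF lin_Ks])
    then have "x (Suc t) s = XHs s - ((\<gamma> * (1 + om)) * k) *\<^sub>R Ks (Rr t s)"
      using x_step[OF s] xhXHs[OF s] by simp
    moreover have "(\<gamma> * (1 + om)) * k = \<gamma>" using k1 by (simp add: mult.assoc mult.commute[of _ k])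
    ultimately have "x (Suc t) s = XHs s - \<gamma> *\<^sub>R Ks (Rr t s)" by simp
    then have xs1: "x (Suc t) s - xs = a s - \<gamma> *\<^sub>R Ks (D s)"
      unfolding a_def R by (simp add: linear_add[OF lin_Ks] algebra_simps)
    have us1: "u (Suc t) s - us = b s + k *\<^sub>R D s"
      unfolding us b_def R by (simp add: algebra_simps)
    have n1: "(norm (a s - \<gamma> *\<^sub>R Ks (D s)))\<^sup>2 = (norm (a s))\<^sup>2 - 2 * \<gamma> * (K (a s) \<bullet> D s) + \<gamma>\<^sup>2 * (norm (Ks (D s)))\<^sup>2"
      using norm_add_scale_sq[of "a s" "-\<gamma>" "Ks (D s)"] by (simp add: adj)
    have n2: "(norm (b s + k *\<^sub>R D s))\<^sup>2 = (norm (b s))\<^sup>2 + 2 * k * (b s \<bullet> D s) + k\<^sup>2 * (norm (D s))\<^sup>2"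
      by (rule norm_add_scale_sq)
    have gd: "G s \<bullet> D s = 2 * Cw * k * (b s \<bullet> D s) - 2 * (K (a s) \<bullet> D s)"
      unfolding G_def by (simp add: inner_diff_left)
    have "Psi (Suc t) s = (1 / \<gamma>) * (norm (a s - \<gamma> *\<^sub>R Ks (D s)))\<^sup>2 + Cw * (norm (b s + k *\<^sub>R D s))\<^sup>2"
      unfolding Psi_def xs1 us1 Cw_def C_def by simp
    also have "\<dots> = Q s + G s \<bullet> D s + \<gamma> * (norm (Ks (D s)))\<^sup>2 + Cw * k\<^sup>2 * (norm (D s))\<^sup>2"
      unfolding n1 n2 gd Q_def using \<gamma> by (simp add: field_simps power2_eq_square)
    finally show ?thesis .
  qed
  have det: "Q s + \<gamma> * (omran * (norm (r t s))\<^sup>2 - \<zeta> * (norm (Ks (r t s)))\<^sup>2) + Cw * k\<^sup>2 * (om * (norm (r t s))\<^sup>2)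
      \<le> c * Psi t s" if s: "s \<in> space M" for s
  proof -
    define P where "P = PR (u t s + \<tau> *\<^sub>R K (XHs s))"
    have PR: "Rs s = P - u t s" unfolding Rs_def RF_def P_def XHs_def ..
    have ds: "(1 / \<gamma>) * (norm (XHs s - xs - \<gamma> *\<^sub>R Ks (P - u t s)))\<^sup>2
           + \<gamma> * (omran * (norm (P - u t s))\<^sup>2 - \<zeta> * (norm (Ks (P - u t s)))\<^sup>2)
           + (1 / \<tau> + 2 * \<mu>h) * (om * (norm (u t s - us))\<^sup>2 + (norm (P - us))\<^sup>2)
         \<le> c * ((1 / \<gamma>) * (norm (x t s - xs))\<^sup>2 + (1 + om) * (1 / \<tau> + 2 * \<mu>h) * (norm (u t s - us))\<^sup>2)"
    proof (rule det_step[OF K_lin \<gamma>(1) \<tau> hs_strong(1) om \<zeta>(2)])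
      show "XHs s = x t s - \<gamma> *\<^sub>R gf (x t s) - \<gamma> *\<^sub>R Ks (u t s)" unfolding XHs_def XH_def ..
      show "gf xs + Ks us = 0" by (rule saddle(1))
      show "\<mu>h * (norm (P - us))\<^sup>2 \<le> ((1 / \<tau>) *\<^sub>R (u t s + \<tau> *\<^sub>R K (XHs s) - P) - K xs) \<bullet> (P - us)"
        unfolding P_def by (rule PR_mono)
      show "(norm (x t s - \<gamma> *\<^sub>R gf (x t s) - (xs - \<gamma> *\<^sub>R gf xs)))\<^sup>2 \<le> c1 * (norm (x t s - xs))\<^sup>2" by (rule grad)
      have "norm (Ks (P - u t s)) \<le> nK * norm (P - u t s)" by (rule normKs)
      then show "(norm (Ks (P - u t s)))\<^sup>2 \<le> nK\<^sup>2 * (norm (P - u t s))\<^sup>2"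
        by (metis norm_ge_zero power_mono power_mult_distrib)
      show "lam * (norm (u t s - us))\<^sup>2 \<le> (norm (Ks (u t s - us)))\<^sup>2" by (rule lam_facts(2))
      show "\<gamma> * \<tau> * ((1 - \<zeta>) * nK\<^sup>2 + omran) \<le> 1" by (rule stepsize)
    qed auto
    have bid: "Cw * (norm (b s))\<^sup>2 + Cw * k\<^sup>2 * (om * (norm (Rs s))\<^sup>2)
        = C * (om * (norm (u t s - us))\<^sup>2 + (norm (P - us))\<^sup>2)"
    proof -
      have Pus: "P - us = (u t s - us) + 1 *\<^sub>R Rs s" unfolding PR by simp
      have e1: "(norm (b s))\<^sup>2 = (norm (u t s - us))\<^sup>2 + 2 * k * ((u t s - us) \<bullet> Rs s) + k\<^sup>2 * (norm (Rs s))\<^sup>2"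
        unfolding b_def by (rule norm_add_scale_sq)
      have e2: "(norm (P - us))\<^sup>2 = (norm (u t s - us))\<^sup>2 + 2 * ((u t s - us) \<bullet> Rs s) + (norm (Rs s))\<^sup>2"
        unfolding Pus norm_add_scale_sq by simp
      have "(1 + om) * k\<^sup>2 + (1 + om) * k\<^sup>2 * om = (k * (1 + om))\<^sup>2" by (simp add: power2_eq_square algebra_simps)
      then have kk: "(1 + om) * k\<^sup>2 + (1 + om) * k\<^sup>2 * om = 1" unfolding k1 by simp
      have "Cw * (norm (b s))\<^sup>2 + Cw * k\<^sup>2 * (om * (norm (Rs s))\<^sup>2)
          = C * ((1 + om) * (norm (u t s - us))\<^sup>2 + 2 * (k * (1 + om)) * ((u t s - us) \<bullet> Rs s)
               + ((1 + om) * k\<^sup>2 + (1 + om) * k\<^sup>2 * om) * (norm (Rs s))\<^sup>2)"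
        unfolding e1 Cw_def by (simp add: algebra_simps)
      also have "\<dots> = C * ((1 + om) * (norm (u t s - us))\<^sup>2 + 2 * ((u t s - us) \<bullet> Rs s) + (norm (Rs s))\<^sup>2)"
        unfolding k1 kk by simp
      also have "\<dots> = C * (om * (norm (u t s - us))\<^sup>2 + (norm (P - us))\<^sup>2)"
        unfolding e2 by (simp add: algebra_simps)
      finally show ?thesis .
    qed
    have aP: "a s = XHs s - xs - \<gamma> *\<^sub>R Ks (P - u t s)" unfolding a_def PR ..
    have "Q s + \<gamma> * (omran * (norm (r t s))\<^sup>2 - \<zeta> * (norm (Ks (r t s)))\<^sup>2) + Cw * k\<^sup>2 * (om * (norm (r t s))\<^sup>2)
       = (1 / \<gamma>) * (norm (XHs s - xs - \<gamma> *\<^sub>R Ks (P - u t s)))\<^sup>2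
           + \<gamma> * (omran * (norm (P - u t s))\<^sup>2 - \<zeta> * (norm (Ks (P - u t s)))\<^sup>2)
           + C * (om * (norm (u t s - us))\<^sup>2 + (norm (P - us))\<^sup>2)"
      using bid unfolding Q_def rRs[OF s] aP PR by linarith
    then show ?thesis using ds unfolding Psi_def C_def by linarith
  qed
  have iS: "integrable M (\<lambda>s. Q s + G s \<bullet> D s + \<gamma> * (norm (Ks (D s)))\<^sup>2 + Cw * k\<^sup>2 * (norm (D s))\<^sup>2)"
    using iQ iGD iKD iD by auto
  have iPsi: "integrable M (Psi (Suc t))"
    using iS by (subst Bochner_Integration.integrable_cong[OF refl]) (auto simp: eq)
  have "(\<integral>s. Psi (Suc t) s \<partial>M) = (\<integral>s. Q s + G s \<bullet> D s + \<gamma> * (norm (Ks (D s)))\<^sup>2 + Cw * k\<^sup>2 * (norm (D s))\<^sup>2 \<partial>M)"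
    by (rule Bochner_Integration.integral_cong[OF refl]) (simp add: eq)
  also have "\<dots> = (\<integral>s. Q s \<partial>M) + (\<integral>s. G s \<bullet> D s \<partial>M) + \<gamma> * (\<integral>s. (norm (Ks (D s)))\<^sup>2 \<partial>M) + Cw * k\<^sup>2 * (\<integral>s. (norm (D s))\<^sup>2 \<partial>M)"
    using iQ iGD iKD iD by simp
  finally have I1: "(\<integral>s. Psi (Suc t) s \<partial>M) = (\<integral>s. Q s \<partial>M) + \<gamma> * (\<integral>s. (norm (Ks (D s)))\<^sup>2 \<partial>M) + Cw * k\<^sup>2 * (\<integral>s. (norm (D s))\<^sup>2 \<partial>M)"
    unfolding IGD by simp
  have V1: "(\<integral>s. (norm (D s))\<^sup>2 \<partial>M) \<le> om * (\<integral>s. (norm (r t s))\<^sup>2 \<partial>M)"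
    using sqi_D(2)[OF int] unfolding D_def by simp
  have V2: "(\<integral>s. (norm (Ks (D s)))\<^sup>2 \<partial>M) + \<zeta> * (\<integral>s. (norm (Ks (r t s)))\<^sup>2 \<partial>M) \<le> omran * (\<integral>s. (norm (r t s))\<^sup>2 \<partial>M)"
    using sqi_D(3)[OF int] unfolding D_def by simp
  have I2: "(\<integral>s. Q s + \<gamma> * (omran * (norm (r t s))\<^sup>2 - \<zeta> * (norm (Ks (r t s)))\<^sup>2) + Cw * k\<^sup>2 * (om * (norm (r t s))\<^sup>2) \<partial>M)
      = (\<integral>s. Q s \<partial>M) + \<gamma> * (omran * (\<integral>s. (norm (r t s))\<^sup>2 \<partial>M) - \<zeta> * (\<integral>s. (norm (Ks (r t s)))\<^sup>2 \<partial>M))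
        + Cw * k\<^sup>2 * (om * (\<integral>s. (norm (r t s))\<^sup>2 \<partial>M))"
    using iQ ir iKr by simp
  have I3: "(\<integral>s. Q s + \<gamma> * (omran * (norm (r t s))\<^sup>2 - \<zeta> * (norm (Ks (r t s)))\<^sup>2) + Cw * k\<^sup>2 * (om * (norm (r t s))\<^sup>2) \<partial>M)
      \<le> (\<integral>s. c * Psi t s \<partial>M)"
    by (rule integral_mono) (use iQ ir iKr int det in auto)
  have "(\<integral>s. Psi (Suc t) s \<partial>M) \<le> (\<integral>s. Q s \<partial>M) + \<gamma> * (omran * (\<integral>s. (norm (r t s))\<^sup>2 \<partial>M) - \<zeta> * (\<integral>s. (norm (Ks (r t s)))\<^sup>2 \<partial>M))
        + Cw * k\<^sup>2 * (om * (\<integral>s. (norm (r t s))\<^sup>2 \<partial>M))"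
  proof -
    have "\<gamma> * (\<integral>s. (norm (Ks (D s)))\<^sup>2 \<partial>M) \<le> \<gamma> * (omran * (\<integral>s. (norm (r t s))\<^sup>2 \<partial>M) - \<zeta> * (\<integral>s. (norm (Ks (r t s)))\<^sup>2 \<partial>M))"
      using V2 \<gamma> by (intro mult_left_mono) auto
    moreover have "Cw * k\<^sup>2 * (\<integral>s. (norm (D s))\<^sup>2 \<partial>M) \<le> Cw * k\<^sup>2 * (om * (\<integral>s. (norm (r t s))\<^sup>2 \<partial>M))"
      using V1 Cw0 by (intro mult_left_mono) auto
    ultimately show ?thesis unfolding I1 by linarith
  qed
  also have "\<dots> \<le> c * (\<integral>s. Psi t s \<partial>M)" using I2 I3 by simp
  finally show ?thesis using iPsi by simp
qed

end


context rp begin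

lemma main_rp:
  defines "Psi0 \<equiv> (1 / \<gamma>) * (norm (x0 - xs))\<^sup>2 + (1 + om) * (1 / \<tau> + 2 * \<mu>h) * (norm (u0 - us))\<^sup>2"
  shows "c < 1
         \<and> (\<forall>t. (\<integral>\<^sup>+ s. ennreal (Psi t s) \<partial>M) \<le> ennreal (c ^ t * Psi0))
         \<and> (AE s in M. (\<lambda>t. x t s) \<longlonglongrightarrow> xs)
         \<and> (AE s in M. (\<lambda>t. xhat t s) \<longlonglongrightarrow> xs)
         \<and> (AE s in M. (\<lambda>t. u t s) \<longlonglongrightarrow> us)"
proof -
  interpret prob_space M by (rule M)
  have P0: "Psi0 \<ge> 0" unfolding Psi0_def using \<gamma> \<tau> om hs_strong(1) by (intro add_nonneg_nonneg mult_nonneg_nonneg) auto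
  have ind: "integrable M (Psi t) \<and> (\<integral>s. Psi t s \<partial>M) \<le> c ^ t * Psi0" for t
  proof (induction t)
    case 0
    have e: "Psi 0 s = Psi0" if "s \<in> space M" for s using init[OF that] unfolding Psi_def Psi0_def by simp
    have "integrable M (Psi 0) \<longleftrightarrow> integrable M (\<lambda>s. Psi0)"
      by (rule Bochner_Integration.integrable_cong[OF refl]) (use e in auto)
    moreover have "(\<integral>s. Psi 0 s \<partial>M) = (\<integral>s. Psi0 \<partial>M)"
      by (rule Bochner_Integration.integral_cong[OF refl]) (use e in auto)
    ultimately show ?case by (simp add: prob_space)
  next
    case (Suc t)
    have st: "integrable M (Psi (Suc t)) \<and> (\<integral>s. Psi (Suc t) s \<partial>M) \<le> c * (\<integral>s. Psi t s \<partial>M)"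
      using step[of t] Suc by blast
    have "(\<integral>s. Psi t s \<partial>M) \<le> c ^ t * Psi0" using Suc by blast
    then have "c * (\<integral>s. Psi t s \<partial>M) \<le> c * (c ^ t * Psi0)" by (rule mult_left_mono[OF _ c_nonneg])
    with st have "(\<integral>s. Psi (Suc t) s \<partial>M) \<le> c * (c ^ t * Psi0)" by (meson order_trans)
    then have "(\<integral>s. Psi (Suc t) s \<partial>M) \<le> c ^ Suc t * Psi0" by (simp only: power_Suc mult.assoc)
    with st show ?case by blast
  qed
  have nn: "(\<integral>\<^sup>+ s. ennreal (Psi t s) \<partial>M) \<le> ennreal (c ^ t * Psi0)" for t
  proof -
    have "(\<integral>\<^sup>+ s. ennreal (Psi t s) \<partial>M) = ennreal (\<integral>s. Psi t s \<partial>M)"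
      by (rule nn_integral_eq_integral) (use ind Psi_nonneg in auto)
    also have "\<dots> \<le> ennreal (c ^ t * Psi0)" using ind[of t] by (simp add: ennreal_leI)
    finally show ?thesis .
  qed
  have "(\<integral>\<^sup>+ s. (\<Sum>t. ennreal (Psi t s)) \<partial>M) = (\<Sum>t. \<integral>\<^sup>+ s. ennreal (Psi t s) \<partial>M)"
    by (rule nn_integral_suminf) measurable
  also have "\<dots> \<le> (\<Sum>t. ennreal (c ^ t * Psi0))" by (intro suminf_le nn) auto
  also have "\<dots> = ennreal (\<Sum>t. c ^ t * Psi0)"
  proof (rule suminf_ennreal2)
    show "summable (\<lambda>t. c ^ t * Psi0)" using c_lt1 c_nonneg by (intro summable_mult2 summable_geometric) simp
  qed (use c_nonneg P0 in simp)
  finally have "(\<integral>\<^sup>+ s. (\<Sum>t. ennreal (Psi t s)) \<partial>M) \<noteq> \<infinity>" by (auto simp: top_unique)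
  from nn_integral_PInf_AE[OF _ this]
  have AEfin: "AE s in M. (\<Sum>t. ennreal (Psi t s)) \<noteq> \<infinity>" by measurable
  have AE0: "AE s in M. (\<lambda>t. Psi t s) \<longlonglongrightarrow> 0"
    using AEfin
  proof eventually_elim
    case (elim s)
    have "summable (\<lambda>t. Psi t s)" by (rule summable_suminf_not_top) (use Psi_nonneg elim in auto)
    then show ?case by (rule summable_LIMSEQ_zero)
  qed
  have Cw: "(1 + om) * (1 / \<tau> + 2 * \<mu>h) > 0" using om \<tau> hs_strong(1) by (simp add: add_pos_nonneg)
  have xconv: "AE s in M. (\<lambda>t. x t s) \<longlonglongrightarrow> xs"
    using AE0
  proof eventually_elim
    case (elim s)
    have lim: "(\<lambda>t. \<gamma> * Psi t s) \<longlonglongrightarrow> 0" by (rule tendsto_mult_right_zero[OF elim])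
    have bnd: "(norm (x t s - xs))\<^sup>2 \<le> \<gamma> * Psi t s" for t
    proof -
      have B: "0 \<le> \<gamma> * ((1 + om) * (1 / \<tau> + 2 * \<mu>h) * (norm (u t s - us))\<^sup>2)" using Cw \<gamma> by simp
      have "\<gamma> * Psi t s = (norm (x t s - xs))\<^sup>2 + \<gamma> * ((1 + om) * (1 / \<tau> + 2 * \<mu>h) * (norm (u t s - us))\<^sup>2)"
        unfolding Psi_def using \<gamma> by (simp add: distrib_left)
      then show ?thesis using B by linarith
    qed
    have "(\<lambda>t. (norm (x t s - xs))\<^sup>2) \<longlonglongrightarrow> 0"
      by (rule tendsto_sandwich[OF always_eventually always_eventually tendsto_const lim]) (use bnd in auto)
    from tendsto_real_sqrt[OF this] have "(\<lambda>t. norm (x t s - xs)) \<longlonglongrightarrow> 0" by simp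
    then have "(\<lambda>t. x t s - xs) \<longlonglongrightarrow> 0" by (rule tendsto_norm_zero_cancel)
    then show ?case by (rule LIM_zero_cancel)
  qed
  have uconv: "AE s in M. (\<lambda>t. u t s) \<longlonglongrightarrow> us"
    using AE0
  proof eventually_elim
    case (elim s)
    define W where "W = (1 + om) * (1 / \<tau> + 2 * \<mu>h)"
    have W0: "W > 0" unfolding W_def by (rule Cw)
    have lim: "(\<lambda>t. Psi t s / W) \<longlonglongrightarrow> 0" using tendsto_divide_zero[OF elim, of W] by simp
    have bnd: "(norm (u t s - us))\<^sup>2 \<le> Psi t s / W" for t
    proof -
      have "(1 / \<gamma>) * (norm (x t s - xs))\<^sup>2 \<ge> 0" using \<gamma> by simp
      then have "W * (norm (u t s - us))\<^sup>2 \<le> Psi t s" unfolding Psi_def W_def by simp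
      then show ?thesis using W0 by (simp add: field_simps)
    qed
    have "(\<lambda>t. (norm (u t s - us))\<^sup>2) \<longlonglongrightarrow> 0"
      by (rule tendsto_sandwich[OF always_eventually always_eventually tendsto_const lim]) (use bnd in auto)
    from tendsto_real_sqrt[OF this] have "(\<lambda>t. norm (u t s - us)) \<longlonglongrightarrow> 0" by simp
    then have "(\<lambda>t. u t s - us) \<longlonglongrightarrow> 0" by (rule tendsto_norm_zero_cancel)
    then show ?case by (rule LIM_zero_cancel)
  qed
  have xhconv: "AE s in M. (\<lambda>t. xhat t s) \<longlonglongrightarrow> xs"
    using xconv uconv AE_space
  proof eventually_elim
    case (elim s)
    have ic: "isCont gf xs" using cont_gf by (simp add: continuous_on_eq_continuous_at)
    have g: "(\<lambda>t. gf (x t s)) \<longlonglongrightarrow> gf xs" by (rule isCont_tendsto_compose[OF ic elim(1)])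
    have k: "(\<lambda>t. Ks (u t s)) \<longlonglongrightarrow> Ks us" by (rule bounded_linear.tendsto[OF bl_Ks elim(2)])
    have "(\<lambda>t. x t s - \<gamma> *\<^sub>R gf (x t s) - \<gamma> *\<^sub>R Ks (u t s)) \<longlonglongrightarrow> xs - \<gamma> *\<^sub>R gf xs - \<gamma> *\<^sub>R Ks us"
      by (intro tendsto_diff tendsto_scaleR tendsto_const elim(1) g k)
    then have "(\<lambda>t. x t s - \<gamma> *\<^sub>R gf (x t s) - \<gamma> *\<^sub>R Ks (u t s)) \<longlonglongrightarrow> xs" using xs_fix by simp
    moreover have "xhat t s = x t s - \<gamma> *\<^sub>R gf (x t s) - \<gamma> *\<^sub>R Ks (u t s)" for t using xhat_def[OF elim(3)] .
    ultimately show ?case by simp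
  qed
  show ?thesis using c_lt1 nn xconv xhconv uconv by blast
qed

end


theorem theorem2:
  fixes K :: "'x::euclidean_space \<Rightarrow> 'u::euclidean_space"
    and f :: "'x \<Rightarrow> real" and gf :: "'x \<Rightarrow> 'x"
    and h :: "'u \<Rightarrow> ereal"
    and Lf \<mu>f \<mu>h \<gamma> \<tau> om omran \<zeta> :: real
    and xs :: 'x and us :: 'u and x0 :: 'x and u0 :: 'u
    and M :: "'s measure"
    and x xhat :: "nat \<Rightarrow> 's \<Rightarrow> 'x" and u r Rr :: "nat \<Rightarrow> 's \<Rightarrow> 'u"
  defines "hs \<equiv> fconj h"
  defines "F \<equiv> natural_filtration M (\<lambda>i s. (x i s, u i s))"
  defines "lam \<equiv> lambda_min (K \<circ> adjoint K)"
  defines "Psi \<equiv> (\<lambda>t s. (1 / \<gamma>) * (norm (x t s - xs))\<^sup>2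
                        + (1 + om) * (1 / \<tau> + 2 * \<mu>h) * (norm (u t s - us))\<^sup>2)"
  defines "c \<equiv> max (max ((1 - \<gamma> * \<mu>f)\<^sup>2) ((\<gamma> * Lf - 1)\<^sup>2))
                 (1 - (2 * \<tau> * \<mu>h + \<gamma> * \<tau> * lam) / ((1 + om) * (1 + 2 * \<tau> * \<mu>h)))"
  assumes K_lin: "linear K" and K_nz: "K \<noteq> (\<lambda>_. 0)"
    and f_convex: "convex_on UNIV f"
    and f_grad: "\<And>y. (f has_derivative (\<lambda>d. gf y \<bullet> d)) (at y)"
    and f_smooth: "\<And>y z. norm (gf y - gf z) \<le> Lf * norm (y - z)"
    and f_strong: "\<mu>f \<ge> 0" "convex_on UNIV (\<lambda>y. f y - \<mu>f / 2 * (norm y)\<^sup>2)"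
    and h_proper: "proper_fun h" and h_closed: "closed_fun h" and h_convex: "convex_fun h"
    and hs_strong: "\<mu>h \<ge> 0" "strongly_convex_fun \<mu>h hs"
    and saddle: "gf xs + adjoint K us = 0" "K xs \<in> subdiff hs us"
    and \<mu>f_pos: "\<mu>f > 0"
    and lam_or_\<mu>h: "lam > 0 \<or> \<mu>h > 0"
    and \<gamma>: "0 < \<gamma>" "\<gamma> < 2 / Lf" and \<tau>: "\<tau> > 0"
    and stepsize: "\<gamma> * \<tau> * ((1 - \<zeta>) * (onorm K)\<^sup>2 + omran) \<le> 1"
    and om: "om \<ge> 0" and omran: "omran \<ge> 0" and \<zeta>: "0 \<le> \<zeta>" "\<zeta> \<le> 1"
    and M: "prob_space M"
    and init: "\<And>s. s \<in> space M \<Longrightarrow> x 0 s = x0 \<and> u 0 s = u0"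
    and xhat_def: "\<And>t s. s \<in> space M \<Longrightarrow>
           xhat t s = x t s - \<gamma> *\<^sub>R gf (x t s) - \<gamma> *\<^sub>R adjoint K (u t s)"
    and r_def: "\<And>t s. s \<in> space M \<Longrightarrow>
           r t s = prox \<tau> hs (u t s + \<tau> *\<^sub>R K (xhat t s)) - u t s"
    and u_step: "\<And>t s. s \<in> space M \<Longrightarrow> u (Suc t) s = u t s + (1 / (1 + om)) *\<^sub>R Rr t s"
    and x_step: "\<And>t s. s \<in> space M \<Longrightarrow>
           x (Suc t) s = xhat t s - (\<gamma> * (1 + om)) *\<^sub>R (adjoint K (u (Suc t) s) - adjoint K (u t s))"
    and R_meas: "\<And>t. Rr t \<in> borel_measurable M"
    and R_int: "\<And>t. integrable M (Rr t)"
    and R_unbiased: "\<And>t b. b \<in> Basis \<Longrightarrow>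
           AE s in M. real_cond_exp M (F t) (\<lambda>s'. Rr t s' \<bullet> b) s = r t s \<bullet> b"
    and R_var: "\<And>t. AE s in M. nn_cond_exp M (F t) (\<lambda>s'. ennreal ((norm (Rr t s' - r t s'))\<^sup>2)) s
                               \<le> ennreal (om * (norm (r t s))\<^sup>2)"
    and R_var_K: "\<And>t. AE s in M.
           nn_cond_exp M (F t) (\<lambda>s'. ennreal ((norm (adjoint K (Rr t s' - r t s')))\<^sup>2)) s
             + ennreal (\<zeta> * (norm (adjoint K (r t s)))\<^sup>2)
           \<le> ennreal (omran * (norm (r t s))\<^sup>2)"
  shows "c < 1
         \<and> (\<forall>t. (\<integral>\<^sup>+ s. ennreal (Psi t s) \<partial>M)
                   \<le> ennreal (c ^ t * ((1 / \<gamma>) * (norm (x0 - xs))\<^sup>2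
                        + (1 + om) * (1 / \<tau> + 2 * \<mu>h) * (norm (u0 - us))\<^sup>2)))
         \<and> (AE s in M. (\<lambda>t. x t s) \<longlonglongrightarrow> xs)
         \<and> (AE s in M. (\<lambda>t. xhat t s) \<longlonglongrightarrow> xs)
         \<and> (AE s in M. (\<lambda>t. u t s) \<longlonglongrightarrow> us)"
proof -
  have RP: "rp K f gf h Lf \<mu>f \<mu>h \<gamma> \<tau> om omran \<zeta> xs us x0 u0 M x xhat u r Rr"
    unfolding rp_def hs_def[symmetric] F_def[symmetric] lam_def[symmetric]
    using K_lin f_grad f_smooth f_strong(2) h_proper hs_strong saddle \<mu>f_pos lam_or_\<mu>h \<gamma> \<tau> stepsize
      om omran \<zeta> M init xhat_def r_def u_step x_step R_meas R_int R_unbiased R_var R_var_K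
    by (intro conjI allI impI) auto
  interpret R: rp K f gf h Lf \<mu>f \<mu>h \<gamma> \<tau> om omran \<zeta> xs us x0 u0 M x xhat u r Rr by (rule RP)
  show ?thesis using R.main_rp unfolding c_def lam_def Psi_def R.Psi_def by simp
qed

end
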